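(* Let $\mathfrak{B}$ be a finite cyclic group, of order at least $3$, of invertible diagonal $2\times 2$ complex matrices, containing three pairwise linearly independent matrices. Let $n\ge 3$ and let $F$ be a Boolean function of arity $2n$. Suppose (binary closure condition) every function of arity less than $2n$ that is realizable by a gadget of the problem $\#(\{F\}\cup\mathfrak{B})$ lies in $\lambda\langle\mathfrak{B}\rangle$. Then $F$ also lies in $\lambda\langle\mathfrak{B}\rangle$.
   Context: Matrices $M\in\mathfrak{B}$ are regarded as binary functions $M(u,v)=M_{uv}$. The problem $\#\mathcal{G}$ takes a finite multigraph with each vertex carrying a function from $\mathcal{G}$ of arity equal to its degree (edges act as binary equality) and outputs the sum over $\{0,1\}$-assignments to edges of the product of vertex functions; a gadget is such a network with dangling edges and its function is obtained by fixing the dangling-edge values; a function is realizable if it is the function of a gadget. $\langle\mathfrak{B}\rangle$ is the set of functions of even arity $2m$ of the form $x\mapsto\prod_{j=1}^m M_j(x_{\pi(2j-1)},x_{\pi(2j)})$ for a permutation $\pi$ of the variables and $M_1,\dots,M_m\in\mathfrak{B}$; $\lambda\langle\mathfrak{B}\rangle=\{\lambda f:\lambda\in\mathbb{C}, f\in\langle\mathfrak{B}\rangle\}$ (so it contains the zero function). *)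

theory Defs
  imports "HOL-Library.FuncSet" Complex_Main
begin

text \<open>Boolean domain {0,1} is rendered as bool (0 = False, 1 = True).
  A 2x2 complex matrix M is a function bool => bool => complex, M u v = M_{uv};
  viewed as the binary function (u,v) |-> M u v.
  A signature (function) is a pair (arity k, f) where f :: bool list => complex
  is only relevant on lists of length k.\<close>

type_synonym mat2 = "bool \<Rightarrow> bool \<Rightarrow> complex"
type_synonym sig = "nat \<times> (bool list \<Rightarrow> complex)"

definition mmul :: "mat2 \<Rightarrow> mat2 \<Rightarrow> mat2" where
  "mmul A B = (\<lambda>u v. A u False * B False v + A u True * B True v)"

definition mone :: mat2 where
  "mone = (\<lambda>u v. if u = v then 1 else 0)"

primrec mpow :: "mat2 \<Rightarrow> nat \<Rightarrow> mat2" where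
  "mpow M 0 = mone"
| "mpow M (Suc k) = mmul M (mpow M k)"

definition is_diagonal :: "mat2 \<Rightarrow> bool" where
  "is_diagonal M \<longleftrightarrow> M False True = 0 \<and> M True False = 0"

definition is_invertible :: "mat2 \<Rightarrow> bool" where
  "is_invertible M \<longleftrightarrow> M False False * M True True - M False True * M True False \<noteq> 0"

definition lin_indep2 :: "mat2 \<Rightarrow> mat2 \<Rightarrow> bool" where
  "lin_indep2 A B \<longleftrightarrow> (\<forall>a b::complex. (\<forall>u v. a * A u v + b * B u v = 0) \<longrightarrow> a = 0 \<and> b = 0)"

definition finite_cyclic_diag_group :: "mat2 set \<Rightarrow> bool" where
  "finite_cyclic_diag_group B \<longleftrightarrow>
     finite B \<and> (\<forall>M\<in>B. is_diagonal M \<and> is_invertible M) \<and>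
     mone \<in> B \<and> (\<forall>M\<in>B. \<forall>N\<in>B. mmul M N \<in> B) \<and>
     (\<forall>M\<in>B. \<exists>N\<in>B. mmul M N = mone \<and> mmul N M = mone) \<and>
     (\<exists>g\<in>B. B = {mpow g k | k. True})"

definition mat_sig :: "mat2 \<Rightarrow> sig" where
  "mat_sig M = (2, \<lambda>x. M (x ! 0) (x ! 1))"

text \<open>Gadgets: vertices 0..<length gfs, vertex v carries signature gfs!v = (d_v, f_v) with
  ports (v,0),...,(v,d_v - 1) (the edge at port i is the i-th input of f_v).
  gdang lists the dangling edges (by the port they are attached to; their order gives the
  variable order of the realized function); gpair is a fixed-point-free involution on the
  remaining ports describing the (multi)edges, including self-loops.\<close>
record gadget =
  gfs :: "sig list"
  gdang :: "(nat \<times> nat) list"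
  gpair :: "nat \<times> nat \<Rightarrow> nat \<times> nat"

definition ports :: "gadget \<Rightarrow> (nat \<times> nat) set" where
  "ports G = {(v, i). v < length (gfs G) \<and> i < fst (gfs G ! v)}"

definition wf_gadget :: "sig set \<Rightarrow> gadget \<Rightarrow> bool" where
  "wf_gadget \<G> G \<longleftrightarrow>
     set (gfs G) \<subseteq> \<G> \<and> distinct (gdang G) \<and> set (gdang G) \<subseteq> ports G \<and>
     (\<forall>q \<in> ports G - set (gdang G).
        gpair G q \<in> ports G - set (gdang G) \<and> gpair G q \<noteq> q \<and> gpair G (gpair G q) = q)"

text \<open>Value of the gadget at input x: sum over {0,1}-assignments to all edges (equivalently to
  ports, consistently along internal edges, with dangling edges fixed to x) of the product of
  the vertex functions.\<close>
definition gval :: "gadget \<Rightarrow> bool list \<Rightarrow> complex" where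
  "gval G x =
     (\<Sum>\<sigma> \<in> {\<sigma> \<in> ports G \<rightarrow>\<^sub>E (UNIV :: bool set).
               (\<forall>j < length (gdang G). \<sigma> (gdang G ! j) = x ! j) \<and>
               (\<forall>q \<in> ports G - set (gdang G). \<sigma> q = \<sigma> (gpair G q))}.
        \<Prod>v < length (gfs G). snd (gfs G ! v) (map (\<lambda>i. \<sigma> (v, i)) [0..<fst (gfs G ! v)]))"

definition realizable :: "sig set \<Rightarrow> nat \<Rightarrow> (bool list \<Rightarrow> complex) \<Rightarrow> bool" where
  "realizable \<G> k f \<longleftrightarrow>
     (\<exists>G. wf_gadget \<G> G \<and> length (gdang G) = k \<and> (\<forall>x. length x = k \<longrightarrow> f x = gval G x))"

definition in_lambda_span :: "mat2 set \<Rightarrow> nat \<Rightarrow> (bool list \<Rightarrow> complex) \<Rightarrow> bool" where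
  "in_lambda_span B k f \<longleftrightarrow> even k \<and>
     (\<exists>(c::complex) (\<pi>::nat \<Rightarrow> nat) Ms. bij_betw \<pi> {..<k} {..<k} \<and>
        length Ms = k div 2 \<and> set Ms \<subseteq> B \<and>
        (\<forall>x. length x = k \<longrightarrow>
           f x = c * (\<Prod>j < k div 2. (Ms ! j) (x ! \<pi> (2*j)) (x ! \<pi> (2*j+1)))))"

end

theory Submission
  imports Defs
begin

definition dot :: "(bool \<Rightarrow> complex) \<Rightarrow> (bool \<Rightarrow> complex) \<Rightarrow> complex" where
  "dot w v = w False * v False + w True * v True"
definition det2 :: "(bool \<Rightarrow> complex) \<Rightarrow> (bool \<Rightarrow> complex) \<Rightarrow> complex" where
  "det2 a b = a False * b True - a True * b False"

lemma det2_F: "det2 a b * u False = b True * dot a u - a True * dot b u"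
  unfolding dot_def det2_def by (simp add: algebra_simps)
lemma det2_T: "det2 a b * u True = a False * dot b u - b False * dot a u"
  unfolding dot_def det2_def by (simp add: algebra_simps)

lemma dot_zero_both:
  assumes "det2 a b \<noteq> 0" "dot a u = 0" "dot b u = 0"
  shows "u x = 0"
  using det2_F[of a b u] det2_T[of a b u] assms by (cases x) auto


lemma prod_remove2:
  assumes "finite A" "s \<in> A" "r \<in> A" "s \<noteq> r"
  shows "prod f A = f s * f r * prod f (A-{s}-{r})"
proof -
  have "prod f A = f s * prod f (A-{s})" using assms by (simp add: prod.remove)
  also have "prod f (A-{s}) = f r * prod f (A-{s}-{r})" using assms by (simp add: prod.remove)
  finally show ?thesis by (simp add: mult.assoc)
qed

lemma prod_upd2:
  assumes "finite A" "s \<in> A" "r \<in> A" "s \<noteq> r"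
  shows "(\<Prod>q\<in>A. \<phi> q (((\<lambda>_. False)(s:=e, r:=c)) q)) = \<phi> s e * \<phi> r c * (\<Prod>q\<in>A-{s}-{r}. \<phi> q False)"
proof -
  have "(\<Prod>q\<in>A-{s}-{r}. \<phi> q (((\<lambda>_. False)(s:=e, r:=c)) q)) = (\<Prod>q\<in>A-{s}-{r}. \<phi> q False)"
    by (rule prod.cong) auto
  then show ?thesis using prod_remove2[OF assms, of "\<lambda>q. \<phi> q (((\<lambda>_. False)(s:=e, r:=c)) q)"] assms
    by simp
qed

lemma prod_upd1:
  assumes "finite A" "s \<in> A"
  shows "(\<Prod>q\<in>A. \<phi> q (((\<lambda>_. False)(s:=e)) q)) = \<phi> s e * (\<Prod>q\<in>A-{s}. \<phi> q False)"
proof -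
  have "(\<Prod>q\<in>A. \<phi> q (((\<lambda>_. False)(s:=e)) q)) = \<phi> s e * (\<Prod>q\<in>A-{s}. \<phi> q (((\<lambda>_. False)(s:=e)) q))"
    using assms by (subst prod.remove[of A s]) auto
  also have "(\<Prod>q\<in>A-{s}. \<phi> q (((\<lambda>_. False)(s:=e)) q)) = (\<Prod>q\<in>A-{s}. \<phi> q False)"
    by (rule prod.cong) auto
  finally show ?thesis .
qed

lemma prod_nz:
  assumes "finite A" "\<And>q. q \<in> A \<Longrightarrow> (f q :: complex) \<noteq> 0"
  shows "prod f A \<noteq> 0"
  using assms by (simp add: prod_zero_iff)

lemma det2_zero_swap:
  assumes "det2 u v = 0" shows "u x * v y = u y * v x"
  using assms unfolding det2_def by (cases x; cases y) (auto simp: algebra_simps)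

lemma dot_det_ident:
  "dot w1 a * dot w2 b - dot w1 b * dot w2 a = det2 w1 w2 * det2 a b"
  unfolding dot_def det2_def by (simp add: algebra_simps)

lemma tensor_par:
  fixes Ax :: "nat set" and h :: "(nat \<Rightarrow> bool) \<Rightarrow> complex" and Dv :: "(bool \<Rightarrow> complex) set"
  assumes fin: "finite Ax" and card3: "3 \<le> card Ax"
    and Dnz: "\<And>d a. d \<in> Dv \<Longrightarrow> d a \<noteq> 0"
    and d12: "det2 w1 w2 \<noteq> 0" and d13: "det2 w1 w3 \<noteq> 0" and d23: "det2 w2 w3 \<noteq> 0"
    and hyp: "\<And>t w. t \<in> Ax \<Longrightarrow> w \<in> {w1,w2,w3} \<Longrightarrow> \<exists>c \<phi>. (\<forall>s. \<phi> s \<in> Dv) \<and>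
        (\<forall>b. dot w (\<lambda>a. h (b(t:=a))) = c * (\<Prod>s\<in>Ax-{t}. \<phi> s (b s)))"
    and t: "t \<in> Ax"
    and ph1: "\<forall>s. \<phi>1 s \<in> Dv" and g1: "\<And>b. dot w1 (\<lambda>a. h (b(t:=a))) = c1 * (\<Prod>s\<in>Ax-{t}. \<phi>1 s (b s))"
    and ph2: "\<forall>s. \<phi>2 s \<in> Dv" and g2: "\<And>b. dot w2 (\<lambda>a. h (b(t:=a))) = c2 * (\<Prod>s\<in>Ax-{t}. \<phi>2 s (b s))"
    and c1: "c1 \<noteq> 0" and c2: "c2 \<noteq> 0" and s: "s \<in> Ax" "s \<noteq> t"
  shows "det2 (\<phi>1 s) (\<phi>2 s) = 0"
proof (rule ccontr)
  assume dnz: "det2 (\<phi>1 s) (\<phi>2 s) \<noteq> 0"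
  have "card (Ax - {t, s}) \<ge> 1"
    using card3 fin t s by (simp add: card_Diff_subset)
  then obtain r where r: "r \<in> Ax" "r \<noteq> t" "r \<noteq> s"
    by (metis Diff_iff card_0_eq finite_Diff fin insertCI not_one_le_zero equals0I)
  define Z where "Z = (\<lambda>_::nat. False)"
  define \<delta> where "\<delta> = det2 w1 w2"
  define \<pi>1 where "\<pi>1 = (\<Prod>q\<in>Ax-{t}-{s}-{r}. \<phi>1 q False)"
  define \<pi>2 where "\<pi>2 = (\<Prod>q\<in>Ax-{t}-{s}-{r}. \<phi>2 q False)"
  have pi1: "\<pi>1 \<noteq> 0" unfolding \<pi>1_def using fin ph1 Dnz by (intro prod_nz) auto
  have pi2: "\<pi>2 \<noteq> 0" unfolding \<pi>2_def using fin ph2 Dnz by (intro prod_nz) auto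
  have gb1: "dot w1 (\<lambda>a. h ((Z(s:=e, r:=c))(t:=a))) = c1 * (\<phi>1 s e * \<phi>1 r c * \<pi>1)" for e c
    unfolding g1 \<pi>1_def Z_def using fin s r t by (subst prod_upd2) auto
  have gb2: "dot w2 (\<lambda>a. h ((Z(s:=e, r:=c))(t:=a))) = c2 * (\<phi>2 s e * \<phi>2 r c * \<pi>2)" for e c
    unfolding g2 \<pi>2_def Z_def using fin s r t by (subst prod_upd2) auto
  have invF: "\<delta> * h ((Z(s:=e, r:=c))(t:=False)) = w2 True * (c1 * (\<phi>1 s e * \<phi>1 r c * \<pi>1)) - w1 True * (c2 * (\<phi>2 s e * \<phi>2 r c * \<pi>2))" for e c
    using det2_F[of w1 w2 "\<lambda>a. h ((Z(s:=e, r:=c))(t:=a))"] gb1[of e c] gb2[of e c] unfolding \<delta>_def by simp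
  have invT: "\<delta> * h ((Z(s:=e, r:=c))(t:=True)) = w1 False * (c2 * (\<phi>2 s e * \<phi>2 r c * \<pi>2)) - w2 False * (c1 * (\<phi>1 s e * \<phi>1 r c * \<pi>1))" for e c
    using det2_T[of w1 w2 "\<lambda>a. h ((Z(s:=e, r:=c))(t:=a))"] gb1[of e c] gb2[of e c] unfolding \<delta>_def by simp
  have twist: "(Z(t:=a, s:=e))(r:=c) = (Z(s:=e, r:=c))(t:=a)" for a e c
    using r s by (auto simp: fun_eq_iff)
  have key: "dot w (\<phi>1 r) = 0 \<or> dot w (\<phi>2 r) = 0" if w: "w \<in> {w1,w2,w3}" for w
  proof -
    obtain c' \<psi> where psi: "\<forall>q. \<psi> q \<in> Dv"
      and hr: "\<And>b. dot w (\<lambda>c. h (b(r:=c))) = c' * (\<Prod>q\<in>Ax-{r}. \<psi> q (b q))"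
      using hyp[OF r(1) w] by blast
    define C where "C a e = dot w (\<lambda>c. h ((Z(t:=a, s:=e))(r:=c)))" for a e
    define K where "K = (\<Prod>q\<in>Ax-{r}-{t}-{s}. \<psi> q False)"
    have Cf: "C a e = c' * (\<psi> t a * \<psi> s e * K)" for a e
      unfolding C_def hr K_def Z_def using fin s r t by (subst prod_upd2) auto
    have rk: "C False False * C True True = C False True * C True False"
      unfolding Cf by (simp add: algebra_simps)
    define \<beta>1 where "\<beta>1 = c1 * \<pi>1 * dot w (\<phi>1 r)"
    define \<beta>2 where "\<beta>2 = c2 * \<pi>2 * dot w (\<phi>2 r)"
    have CF: "\<delta> * C False e = w2 True * \<beta>1 * \<phi>1 s e - w1 True * \<beta>2 * \<phi>2 s e" for e
    proof -
      have "\<delta> * C False e = w False * (\<delta> * h ((Z(s:=e, r:=False))(t:=False))) + w True * (\<delta> * h ((Z(s:=e, r:=True))(t:=False)))"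
        unfolding C_def twist dot_def by (simp add: algebra_simps)
      also have "\<dots> = w2 True * \<beta>1 * \<phi>1 s e - w1 True * \<beta>2 * \<phi>2 s e"
        unfolding invF \<beta>1_def \<beta>2_def dot_def by (simp add: algebra_simps)
      finally show ?thesis .
    qed
    have CT: "\<delta> * C True e = w1 False * \<beta>2 * \<phi>2 s e - w2 False * \<beta>1 * \<phi>1 s e" for e
    proof -
      have "\<delta> * C True e = w False * (\<delta> * h ((Z(s:=e, r:=False))(t:=True))) + w True * (\<delta> * h ((Z(s:=e, r:=True))(t:=True)))"
        unfolding C_def twist dot_def by (simp add: algebra_simps)
      also have "\<dots> = w1 False * \<beta>2 * \<phi>2 s e - w2 False * \<beta>1 * \<phi>1 s e"
        unfolding invT \<beta>1_def \<beta>2_def dot_def by (simp add: algebra_simps)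
      finally show ?thesis .
    qed
    have "(\<delta> * C False False) * (\<delta> * C True True) - (\<delta> * C False True) * (\<delta> * C True False)
          = \<delta> * \<beta>1 * \<beta>2 * det2 (\<phi>1 s) (\<phi>2 s)"
      by (simp only: CF CT) (simp add: \<delta>_def det2_def algebra_simps)
    moreover have "(\<delta> * C False False) * (\<delta> * C True True) - (\<delta> * C False True) * (\<delta> * C True False) = 0"
      using rk by (simp add: algebra_simps)
    ultimately have "\<delta> * \<beta>1 * \<beta>2 * det2 (\<phi>1 s) (\<phi>2 s) = 0" by simp
    then have "\<beta>1 = 0 \<or> \<beta>2 = 0" using dnz d12 unfolding \<delta>_def by simp
    then show ?thesis unfolding \<beta>1_def \<beta>2_def using c1 c2 pi1 pi2 by simp
  qed
  have n1: "\<phi>1 r False \<noteq> 0" "\<phi>2 r False \<noteq> 0" using ph1 ph2 Dnz by auto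
  show False
    using key[of w1] key[of w2] key[of w3] n1
      dot_zero_both[OF d12, of "\<phi>1 r" False] dot_zero_both[OF d13, of "\<phi>1 r" False] dot_zero_both[OF d23, of "\<phi>1 r" False]
      dot_zero_both[OF d12, of "\<phi>2 r" False] dot_zero_both[OF d13, of "\<phi>2 r" False] dot_zero_both[OF d23, of "\<phi>2 r" False]
    by auto
qed


lemma tensor:
  fixes Ax :: "nat set" and h :: "(nat \<Rightarrow> bool) \<Rightarrow> complex" and Dv :: "(bool \<Rightarrow> complex) set"
  assumes fin: "finite Ax" and card3: "3 \<le> card Ax"
    and Dnz: "\<And>d a. d \<in> Dv \<Longrightarrow> d a \<noteq> 0" and Dne: "Dv \<noteq> {}"
    and d12: "det2 w1 w2 \<noteq> 0" and d13: "det2 w1 w3 \<noteq> 0" and d23: "det2 w2 w3 \<noteq> 0"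
    and hyp: "\<And>t w. t \<in> Ax \<Longrightarrow> w \<in> {w1,w2,w3} \<Longrightarrow> \<exists>c \<phi>. (\<forall>s. \<phi> s \<in> Dv) \<and>
        (\<forall>b. dot w (\<lambda>a. h (b(t:=a))) = c * (\<Prod>s\<in>Ax-{t}. \<phi> s (b s)))"
  shows "\<exists>c \<phi>. (\<forall>s. \<phi> s \<in> Dv) \<and> (\<forall>b. h b = c * (\<Prod>s\<in>Ax. \<phi> s (b s)))"
proof (cases "\<forall>b. h b = 0")
  case True
  obtain d where "d \<in> Dv" using Dne by blast
  then show ?thesis using True by (intro exI[of _ 0] exI[of _ "\<lambda>_. d"]) auto
next
  case False
  then obtain b0 where b0: "h b0 \<noteq> 0" by blast
  have "Ax \<noteq> {}" using card3 by auto
  then obtain t where t: "t \<in> Ax" by blast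
  obtain c1 \<phi>1 where ph1: "\<forall>s. \<phi>1 s \<in> Dv" and g1: "\<And>b. dot w1 (\<lambda>a. h (b(t:=a))) = c1 * (\<Prod>s\<in>Ax-{t}. \<phi>1 s (b s))"
    using hyp[OF t, of w1] by blast
  obtain c2 \<phi>2 where ph2: "\<forall>s. \<phi>2 s \<in> Dv" and g2: "\<And>b. dot w2 (\<lambda>a. h (b(t:=a))) = c2 * (\<Prod>s\<in>Ax-{t}. \<phi>2 s (b s))"
    using hyp[OF t, of w2] by blast
  define V where "V b = (\<lambda>a. h (b(t:=a)))" for b
  have par: "dot w1 (V b) * dot w2 (V b') = dot w1 (V b') * dot w2 (V b)" for b b'
  proof (cases "c1 = 0 \<or> c2 = 0")
    case True then show ?thesis unfolding V_def g1 g2 by auto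
  next
    case False
    have d0: "det2 (\<phi>1 s) (\<phi>2 s) = 0" if "s \<in> Ax - {t}" for s
      apply (rule tensor_par[of Ax Dv w1 w2 w3 h t \<phi>1 c1 \<phi>2 c2 s])
      using fin card3 Dnz d12 d13 d23 t ph1 g1 ph2 g2 False that hyp by auto
    have "(\<Prod>s\<in>Ax-{t}. \<phi>1 s (b s)) * (\<Prod>s\<in>Ax-{t}. \<phi>2 s (b' s)) = (\<Prod>s\<in>Ax-{t}. \<phi>1 s (b s) * \<phi>2 s (b' s))"
      by (simp add: prod.distrib)
    also have "\<dots> = (\<Prod>s\<in>Ax-{t}. \<phi>1 s (b' s) * \<phi>2 s (b s))"
      by (rule prod.cong) (auto intro: det2_zero_swap d0)
    also have "\<dots> = (\<Prod>s\<in>Ax-{t}. \<phi>1 s (b' s)) * (\<Prod>s\<in>Ax-{t}. \<phi>2 s (b s))"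
      by (simp add: prod.distrib)
    finally show ?thesis unfolding V_def g1 g2 by (simp add: algebra_simps)
  qed
  have det0: "det2 (V b) (V b') = 0" for b b'
    using dot_det_ident[of w1 "V b" w2 "V b'"] par[of b b'] d12 by simp
  define u where "u = V b0"
  have Vb: "V b (b t) = h b" for b unfolding V_def by simp
  have u0: "u (b0 t) \<noteq> 0" using Vb[of b0] b0 unfolding u_def by simp
  obtain w where w: "w \<in> {w1,w2,w3}" and wu: "dot w u \<noteq> 0"
    using dot_zero_both[OF d12, of u "b0 t"] u0 by blast
  obtain c \<phi> where ph: "\<forall>s. \<phi> s \<in> Dv" and g: "\<And>b. dot w (\<lambda>a. h (b(t:=a))) = c * (\<Prod>s\<in>Ax-{t}. \<phi> s (b s))"
    using hyp[OF t w] by blast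
  define \<gamma> where "\<gamma> = c / dot w u"
  have rep: "h b = u (b t) * \<gamma> * (\<Prod>s\<in>Ax-{t}. \<phi> s (b s))" for b
  proof -
    have sw: "V b x * u y = V b y * u x" for x y
      using det2_zero_swap[OF det0[of b "b0"]] unfolding u_def by simp
    have e: "w False * (V b (b t) * u False) + w True * (V b (b t) * u True) = w False * (V b False * u (b t)) + w True * (V b True * u (b t))"
      using sw[of "b t" False] sw[of "b t" True] by simp
    have "h b * dot w u = u (b t) * dot w (V b)"
      unfolding Vb[symmetric] dot_def using e by (simp add: algebra_simps)
    then have "h b * dot w u = u (b t) * (c * (\<Prod>s\<in>Ax-{t}. \<phi> s (b s)))"
      unfolding V_def g by simp
    then show ?thesis unfolding \<gamma>_def using wu by (simp add: field_simps)
  qed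
  have gnz: "\<gamma> \<noteq> 0" using rep[of b0] b0 by auto
  have "card (Ax - {t}) \<ge> 1" using card3 fin t by (simp add: card_Diff_subset)
  then obtain r where r: "r \<in> Ax" "r \<noteq> t"
    by (metis Diff_iff card_0_eq finite_Diff fin insertCI not_one_le_zero equals0I)
  have pr0: "\<phi> r False \<noteq> 0" using ph Dnz by auto
  obtain w' where w': "w' \<in> {w1,w2,w3}" and wp: "dot w' (\<phi> r) \<noteq> 0"
    using dot_zero_both[OF d12, of "\<phi> r" False] pr0 by blast
  obtain c' \<psi> where ps: "\<forall>s. \<psi> s \<in> Dv" and gr: "\<And>b. dot w' (\<lambda>a. h (b(r:=a))) = c' * (\<Prod>s\<in>Ax-{r}. \<psi> s (b s))"
    using hyp[OF r(1) w'] by blast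
  define K1 where "K1 = (\<Prod>q\<in>Ax-{t}-{r}. \<phi> q False)"
  define K2 where "K2 = (\<Prod>q\<in>Ax-{r}-{t}. \<psi> q False)"
  have K1: "K1 \<noteq> 0" unfolding K1_def using fin ph Dnz by (intro prod_nz) auto
  define \<kappa> where "\<kappa> = c' * K2 / (\<gamma> * dot w' (\<phi> r) * K1)"
  have ua: "u a = \<kappa> * \<psi> t a" for a
  proof -
    let ?b = "(\<lambda>_::nat. False)(t:=a)"
    have e1: "h (?b(r:=x)) = u a * \<gamma> * (\<phi> r x * K1)" for x
    proof -
      have "(\<Prod>s\<in>Ax-{t}. \<phi> s ((?b(r:=x)) s)) = (\<Prod>s\<in>Ax-{t}. \<phi> s (((\<lambda>_. False)(r:=x)) s))"
        by (rule prod.cong) auto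
      also have "\<dots> = \<phi> r x * K1" unfolding K1_def using fin r by (subst prod_upd1) auto
      finally have "(\<Prod>s\<in>Ax-{t}. \<phi> s ((?b(r:=x)) s)) = \<phi> r x * K1" .
      then show ?thesis using rep[of "?b(r:=x)"] r by simp
    qed
    have "dot w' (\<lambda>x. h (?b(r:=x))) = u a * \<gamma> * dot w' (\<phi> r) * K1"
      unfolding dot_def e1 by (simp add: algebra_simps)
    moreover have "(\<Prod>s\<in>Ax-{r}. \<psi> s (?b s)) = \<psi> t a * K2"
      unfolding K2_def using fin r t by (subst prod_upd1) auto
    ultimately have "u a * \<gamma> * dot w' (\<phi> r) * K1 = c' * (\<psi> t a * K2)" using gr[of ?b] by simp
    then show ?thesis unfolding \<kappa>_def using gnz wp K1 by (simp add: field_simps)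
  qed
  define \<phi>' where "\<phi>' = \<phi>(t := \<psi> t)"
  have "h b = (\<kappa> * \<gamma>) * (\<Prod>s\<in>Ax. \<phi>' s (b s))" for b
  proof -
    have "(\<Prod>s\<in>Ax. \<phi>' s (b s)) = \<phi>' t (b t) * (\<Prod>s\<in>Ax-{t}. \<phi>' s (b s))"
      using fin t by (simp add: prod.remove)
    also have "(\<Prod>s\<in>Ax-{t}. \<phi>' s (b s)) = (\<Prod>s\<in>Ax-{t}. \<phi> s (b s))"
      unfolding \<phi>'_def by (rule prod.cong) auto
    finally show ?thesis unfolding rep ua \<phi>'_def by simp
  qed
  moreover have "\<forall>s. \<phi>' s \<in> Dv" unfolding \<phi>'_def using ph ps by auto
  ultimately show ?thesis by blast
qed


definition eqon :: "nat set \<Rightarrow> (nat \<Rightarrow> nat) \<Rightarrow> (nat \<Rightarrow> bool) \<Rightarrow> bool" where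
  "eqon I \<tau> y \<longleftrightarrow> (\<forall>p\<in>I. y p = y (\<tau> p))"
definition fpf :: "nat set \<Rightarrow> (nat \<Rightarrow> nat) \<Rightarrow> bool" where
  "fpf I \<tau> \<longleftrightarrow> (\<forall>p\<in>I. \<tau> p \<in> I \<and> \<tau> p \<noteq> p \<and> \<tau> (\<tau> p) = p)"
definition axes :: "nat set \<Rightarrow> (nat \<Rightarrow> nat) \<Rightarrow> nat set" where
  "axes I \<tau> = {p\<in>I. p < \<tau> p}"
definition LamF :: "(bool \<Rightarrow> complex) set \<Rightarrow> nat set \<Rightarrow> ((nat \<Rightarrow> bool) \<Rightarrow> complex) \<Rightarrow> bool" where
  "LamF Dv I G \<longleftrightarrow> (\<exists>c \<tau> \<phi>. fpf I \<tau> \<and> (\<forall>p. \<phi> p \<in> Dv) \<and>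
     (\<forall>y. G y = (if eqon I \<tau> y then c * (\<Prod>p\<in>axes I \<tau>. \<phi> p (y p)) else 0)))"
definition con :: "((nat \<Rightarrow> bool) \<Rightarrow> complex) \<Rightarrow> (bool \<Rightarrow> complex) \<Rightarrow> nat \<Rightarrow> nat \<Rightarrow> (nat \<Rightarrow> bool) \<Rightarrow> complex" where
  "con Fa w i j y = dot w (\<lambda>a. Fa (y(i:=a, j:=a)))"

lemma det2_anti: "det2 b a = - det2 a b" unfolding det2_def by (simp add: algebra_simps)

lemma lin3:
  assumes "det2 a b \<noteq> 0" "det2 a c \<noteq> 0" "det2 b c \<noteq> 0"
  shows "\<exists>\<alpha> \<beta>. \<alpha> \<noteq> 0 \<and> \<beta> \<noteq> 0 \<and> (\<forall>v. dot c v = \<alpha> * dot a v + \<beta> * dot b v)"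
proof -
  define \<alpha> where "\<alpha> = det2 c b / det2 a b"
  define \<beta> where "\<beta> = det2 a c / det2 a b"
  have "\<alpha> \<noteq> 0" unfolding \<alpha>_def using assms det2_anti[of b c] by simp
  moreover have "\<beta> \<noteq> 0" unfolding \<beta>_def using assms by simp
  moreover have "c x = \<alpha> * a x + \<beta> * b x" for x
  proof -
    have "det2 a b * c x = det2 c b * a x + det2 a c * b x"
      unfolding det2_def by (cases x) (simp_all add: algebra_simps)
    then show ?thesis using assms(1) unfolding \<alpha>_def \<beta>_def by (simp add: field_simps)
  qed
  ultimately show ?thesis by (intro exI[of _ \<alpha>] exI[of _ \<beta>]) (auto simp: dot_def algebra_simps)
qed

lemma fpfD: "fpf I \<tau> \<Longrightarrow> p \<in> I \<Longrightarrow> \<tau> p \<in> I \<and> \<tau> p \<noteq> p \<and> \<tau> (\<tau> p) = p"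
  unfolding fpf_def by blast

lemma eqonD: "eqon I \<tau> y \<Longrightarrow> p \<in> I \<Longrightarrow> y p = y (\<tau> p)"
  unfolding eqon_def by blast

lemma eqon_ind:
  assumes "fpf I \<tau>" "p \<in> I"
  shows "eqon I \<tau> (\<lambda>q. q = p \<or> q = \<tau> p)"
  using assms unfolding eqon_def fpf_def by metis

lemma MI:
  assumes "fpf I \<tau>" "fpf I \<tau>'" "\<And>y. eqon I \<tau>' y \<Longrightarrow> eqon I \<tau> y" "p \<in> I"
  shows "\<tau> p = \<tau>' p"
proof -
  have "eqon I \<tau> (\<lambda>q. q = p \<or> q = \<tau>' p)" using assms eqon_ind[OF assms(2,4)] by blast
  then have "(\<tau> p = p \<or> \<tau> p = \<tau>' p)" using assms(4) unfolding eqon_def by auto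
  then show ?thesis using fpfD[OF assms(1,4)] by auto
qed

lemma eqon_flip:
  assumes "fpf I \<tau>" "eqon I \<tau> y" "p \<in> I"
  shows "eqon I \<tau> (y(p := \<not> y p, \<tau> p := \<not> y p))"
  using assms unfolding eqon_def fpf_def by (metis fun_upd_apply)

locale core =
  fixes N :: nat and Fa :: "(nat \<Rightarrow> bool) \<Rightarrow> complex" and Dv :: "(bool \<Rightarrow> complex) set"
    and w1 w2 w3 :: "bool \<Rightarrow> complex"
  assumes N6: "6 \<le> N" and Neven: "even N"
    and Fdep: "\<And>y y'. (\<forall>p<N. y p = y' p) \<Longrightarrow> Fa y = Fa y'"
    and Dnz: "\<And>d a. d \<in> Dv \<Longrightarrow> d a \<noteq> 0"
    and w_in: "w1 \<in> Dv" "w2 \<in> Dv" "w3 \<in> Dv"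
    and d12: "det2 w1 w2 \<noteq> 0" and d13: "det2 w1 w3 \<noteq> 0" and d23: "det2 w2 w3 \<noteq> 0"
    and LAM: "\<And>i j w. i < N \<Longrightarrow> j < N \<Longrightarrow> i \<noteq> j \<Longrightarrow> w \<in> {w1,w2,w3} \<Longrightarrow>
          LamF Dv ({..<N} - {i,j}) (con Fa w i j)"
begin

lemma prod_Dv_nz:
  assumes "finite A" "\<forall>p. \<phi> p \<in> Dv"
  shows "(\<Prod>p\<in>A. \<phi> p (y p)) \<noteq> 0"
  using assms Dnz by (intro prod_nz) auto

definition good :: "nat \<Rightarrow> nat \<Rightarrow> (nat \<Rightarrow> nat) \<Rightarrow> bool" where
  "good i j Q \<longleftrightarrow> i < N \<and> j < N \<and> i \<noteq> j \<and> fpf {..<N} Q \<and> Q i = j \<and>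
     (\<forall>z. Fa z \<noteq> 0 \<longrightarrow> z i = z j \<longrightarrow> eqon {..<N} Q z) \<and>
     (\<forall>y. eqon {..<N} Q y \<longrightarrow> (\<exists>a. Fa (y(i:=a, j:=a)) \<noteq> 0)) \<and>
     (\<forall>w\<in>{w1,w2,w3}. \<exists>c \<phi>. (\<forall>p. \<phi> p \<in> Dv) \<and>
        (\<forall>y. eqon {..<N} Q y \<longrightarrow> con Fa w i j y = c * (\<Prod>p\<in>axes {..<N} Q - {i,j}. \<phi> p (y p))))"

lemma pair_core:
  assumes ij: "i < N" "j < N" "i \<noteq> j"
    and wabc: "{wa,wb,wc} = {w1,w2,w3}"
    and dab: "det2 wa wb \<noteq> 0" and dac: "det2 wa wc \<noteq> 0" and dbc: "det2 wb wc \<noteq> 0"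
    and xa: "con Fa wa i j x \<noteq> 0" and xb: "con Fa wb i j x \<noteq> 0"
  shows "\<exists>Q. good i j Q"
proof -
  define I where "I = {..<N} - {i,j}"
  have finI: "finite I" unfolding I_def by simp
  have finAx: "finite (axes I \<tau>)" for \<tau> unfolding axes_def using finI by simp
  have wa: "wa \<in> {w1,w2,w3}" and wb: "wb \<in> {w1,w2,w3}" and wc: "wc \<in> {w1,w2,w3}" using wabc by auto
  obtain ca \<tau>a \<phi>a where fa: "fpf I \<tau>a" and pa: "\<forall>p. \<phi>a p \<in> Dv"
    and Ga: "\<And>y. con Fa wa i j y = (if eqon I \<tau>a y then ca * (\<Prod>p\<in>axes I \<tau>a. \<phi>a p (y p)) else 0)"
    using LAM[OF ij wa] unfolding LamF_def I_def by blast
  obtain cb \<tau>b \<phi>b where fb: "fpf I \<tau>b" and pb: "\<forall>p. \<phi>b p \<in> Dv"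
    and Gb: "\<And>y. con Fa wb i j y = (if eqon I \<tau>b y then cb * (\<Prod>p\<in>axes I \<tau>b. \<phi>b p (y p)) else 0)"
    using LAM[OF ij wb] unfolding LamF_def I_def by blast
  obtain cc \<tau>c \<phi>c where fc: "fpf I \<tau>c" and pc: "\<forall>p. \<phi>c p \<in> Dv"
    and Gc: "\<And>y. con Fa wc i j y = (if eqon I \<tau>c y then cc * (\<Prod>p\<in>axes I \<tau>c. \<phi>c p (y p)) else 0)"
    using LAM[OF ij wc] unfolding LamF_def I_def by blast
  obtain \<alpha> \<beta> where al: "\<alpha> \<noteq> 0" and be: "\<beta> \<noteq> 0" and lc: "\<And>v. dot wc v = \<alpha> * dot wa v + \<beta> * dot wb v"
    using lin3[OF dab dac dbc] by blast
  have Gabc: "con Fa wc i j y = \<alpha> * con Fa wa i j y + \<beta> * con Fa wb i j y" for y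
    unfolding con_def lc ..
  have ca: "ca \<noteq> 0" using xa Ga[of x] by (auto split: if_splits)
  have cb: "cb \<noteq> 0" using xb Gb[of x] by (auto split: if_splits)
  have xea: "eqon I \<tau>a x" using xa Ga[of x] by (auto split: if_splits)
  have xeb: "eqon I \<tau>b x" using xb Gb[of x] by (auto split: if_splits)
  have nzA: "con Fa wa i j y \<noteq> 0 \<longleftrightarrow> eqon I \<tau>a y" for y
    using Ga[of y] ca prod_Dv_nz[OF finAx pa] by auto
  have nzB: "con Fa wb i j y \<noteq> 0 \<longleftrightarrow> eqon I \<tau>b y" for y
    using Gb[of y] cb prod_Dv_nz[OF finAx pb] by auto
  have nzC: "con Fa wc i j y \<noteq> 0 \<Longrightarrow> eqon I \<tau>c y" for y
    using Gc[of y] by (auto split: if_splits)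
  have same: "\<tau>a p = \<tau>b p" if p: "p \<in> I" for p
  proof (rule ccontr)
    assume ne: "\<tau>a p \<noteq> \<tau>b p"
    define q1 where "q1 = \<tau>a p"
    define q2 where "q2 = \<tau>b p"
    have q1: "q1 \<in> I" "q1 \<noteq> p" using fpfD[OF fa p] unfolding q1_def by auto
    have q2: "q2 \<in> I" "q2 \<noteq> p" using fpfD[OF fb p] unfolding q2_def by auto
    have q12: "q1 \<noteq> q2" using ne unfolding q1_def q2_def .
    have xq1: "x q1 = x p" using xea p unfolding eqon_def q1_def by auto
    have xq2: "x q2 = x p" using xeb p unfolding eqon_def q2_def by auto
    define z where "z = x(p := \<not> x p, q2 := \<not> x p)"
    define z' where "z' = x(p := \<not> x p, q1 := \<not> x p)"
    have "eqon I \<tau>b z" unfolding z_def q2_def using eqon_flip[OF fb xeb p] .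
    then have zb: "con Fa wb i j z \<noteq> 0" using nzB by simp
    have "z p \<noteq> z (\<tau>a p)" using q1 q12 xq1 unfolding z_def q1_def[symmetric] by auto
    then have "\<not> eqon I \<tau>a z" using p unfolding eqon_def by blast
    then have za: "con Fa wa i j z = 0" using nzA by blast
    have "con Fa wc i j z \<noteq> 0" using Gabc[of z] za zb be by simp
    then have zc: "eqon I \<tau>c z" by (rule nzC)
    have "eqon I \<tau>a z'" unfolding z'_def q1_def using eqon_flip[OF fa xea p] .
    then have za': "con Fa wa i j z' \<noteq> 0" using nzA by simp
    have "z' p \<noteq> z' (\<tau>b p)" using q2 q12 xq2 unfolding z'_def q2_def[symmetric] by auto
    then have "\<not> eqon I \<tau>b z'" using p unfolding eqon_def by blast
    then have zb': "con Fa wb i j z' = 0" using nzB by blast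
    have "con Fa wc i j z' \<noteq> 0" using Gabc[of z'] za' zb' al by simp
    then have zc': "eqon I \<tau>c z'" by (rule nzC)
    define r where "r = \<tau>c q1"
    have r: "r \<noteq> q1" using fpfD[OF fc q1(1)] unfolding r_def by auto
    have "z r = z q1" "z' r = z' q1" using zc zc' q1 unfolding eqon_def r_def by auto
    then show False using r q1 q2 q12 xq1 xq2 unfolding z_def z'_def
      by (cases "r = p"; cases "r = q2") auto
  qed
  have eqab: "eqon I \<tau>b y \<longleftrightarrow> eqon I \<tau>a y" for y using same unfolding eqon_def by auto
  have axab: "axes I \<tau>b = axes I \<tau>a" using same unfolding axes_def by auto
  define Q where "Q = \<tau>a(i := j, j := i)"
  have fQ: "fpf {..<N} Q"
    unfolding fpf_def Q_def using fpfD[OF fa] ij unfolding I_def by auto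
  have eqQ: "eqon {..<N} Q y \<longleftrightarrow> eqon I \<tau>a y \<and> y i = y j" for y
  proof -
    have "\<tau>a p \<noteq> i \<and> \<tau>a p \<noteq> j" if "p \<in> I" for p using fpfD[OF fa that] unfolding I_def by auto
    then show ?thesis unfolding eqon_def Q_def I_def using ij by auto
  qed
  have axQ: "axes {..<N} Q - {i,j} = axes I \<tau>a"
    unfolding axes_def Q_def I_def by auto
  have B1: "eqon {..<N} Q z" if "Fa z \<noteq> 0" "z i = z j" for z
  proof (rule ccontr)
    assume "\<not> eqon {..<N} Q z"
    then have "\<not> eqon I \<tau>a z" using eqQ that(2) by blast
    then have "con Fa wa i j z = 0" "con Fa wb i j z = 0" using nzA nzB eqab by blast+
    then have "Fa (z(i := z i, j := z i)) = 0"
      using dot_zero_both[OF dab, of "\<lambda>a. Fa (z(i:=a, j:=a))" "z i"] unfolding con_def by simp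
    moreover have "z(i := z i, j := z i) = z" using that(2) by (auto simp: fun_eq_iff)
    ultimately show False using that(1) by simp
  qed
  have SURJ: "\<exists>a. Fa (y(i:=a, j:=a)) \<noteq> 0" if "eqon {..<N} Q y" for y
  proof (rule ccontr)
    assume "\<not> (\<exists>a. Fa (y(i:=a, j:=a)) \<noteq> 0)"
    then have "con Fa wa i j y = 0" unfolding con_def dot_def by simp
    then show False using nzA eqQ that by blast
  qed
  have PROD: "\<exists>c \<phi>. (\<forall>p. \<phi> p \<in> Dv) \<and>
        (\<forall>y. eqon {..<N} Q y \<longrightarrow> con Fa w i j y = c * (\<Prod>p\<in>axes {..<N} Q - {i,j}. \<phi> p (y p)))"
    if w: "w \<in> {w1,w2,w3}" for w
  proof -
    have "w = wa \<or> w = wb \<or> w = wc" using w wabc by auto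
    then show ?thesis
    proof (elim disjE)
      assume "w = wa" then show ?thesis using Ga pa eqQ axQ by (intro exI[of _ ca] exI[of _ \<phi>a]) auto
    next
      assume "w = wb" then show ?thesis using Gb pb eqQ axQ eqab axab by (intro exI[of _ cb] exI[of _ \<phi>b]) auto
    next
      assume wcc: "w = wc"
      show ?thesis
      proof (cases "cc = 0")
        case True then show ?thesis using Gc pc wcc by (intro exI[of _ 0] exI[of _ \<phi>c]) auto
      next
        case False
        have "eqon I \<tau>a y" if "eqon I \<tau>c y" for y
        proof -
          have "con Fa wc i j y \<noteq> 0" using Gc[of y] that False prod_Dv_nz[OF finAx pc] by auto
          then have "con Fa wa i j y \<noteq> 0 \<or> con Fa wb i j y \<noteq> 0" using Gabc[of y] by auto
          then show ?thesis using nzA nzB eqab by blast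
        qed
        then have sc: "\<tau>a p = \<tau>c p" if "p \<in> I" for p using MI[OF fa fc _ that] by blast
        have "eqon I \<tau>c y \<longleftrightarrow> eqon I \<tau>a y" for y using sc unfolding eqon_def by auto
        moreover have "axes I \<tau>c = axes I \<tau>a" using sc unfolding axes_def by auto
        ultimately show ?thesis using Gc pc eqQ axQ wcc by (intro exI[of _ cc] exI[of _ \<phi>c]) auto
      qed
    qed
  qed
  have "good i j Q" unfolding good_def using ij fQ B1 SURJ PROD by (auto simp: Q_def)
  then show ?thesis by blast
qed

end

context core begin

lemma pair:
  assumes ij: "i < N" "j < N" "i \<noteq> j" and x: "Fa x \<noteq> 0" "x i = x j"
  shows "\<exists>Q. good i j Q"
proof -
  define v where "v = (\<lambda>a. Fa (x(i:=a, j:=a)))"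
  have "x(i := x i, j := x i) = x" using x(2) by (auto simp: fun_eq_iff)
  then have v0: "v (x i) \<noteq> 0" unfolding v_def using x(1) by simp
  have cv: "con Fa w i j x = dot w v" for w unfolding con_def v_def ..
  have d21: "det2 w2 w1 \<noteq> 0" and d31: "det2 w3 w1 \<noteq> 0" and d32: "det2 w3 w2 \<noteq> 0"
    using d12 d13 d23 det2_anti by (metis neg_equal_0_iff_equal)+
  consider "dot w1 v \<noteq> 0" "dot w2 v \<noteq> 0" | "dot w1 v = 0" | "dot w2 v = 0" by blast
  then show ?thesis
  proof cases
    case 1
    show ?thesis by (rule pair_core[OF ij _ d12 d13 d23, of x]) (use 1 cv in auto)
  next
    case 2
    have "dot w2 v \<noteq> 0" using dot_zero_both[OF d12, of v "x i"] 2 v0 by auto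
    moreover have "dot w3 v \<noteq> 0" using dot_zero_both[OF d13, of v "x i"] 2 v0 by auto
    ultimately show ?thesis by (intro pair_core[OF ij _ d23 d21 d31, of x]) (auto simp: cv)
  next
    case 3
    have "dot w1 v \<noteq> 0" using dot_zero_both[OF d12, of v "x i"] 3 v0 by auto
    moreover have "dot w3 v \<noteq> 0" using dot_zero_both[OF d23, of v "x i"] 3 v0 by auto
    ultimately show ?thesis by (intro pair_core[OF ij _ d13 d12 d32, of x]) (auto simp: cv)
  qed
qed

lemma good_sym:
  assumes "good i j Q" shows "good j i Q"
proof -
  have ij: "i \<noteq> j" using assms unfolding good_def by auto
  have u: "y(j:=a, i:=a) = y(i:=a, j:=a)" for y a using ij by (auto simp: fun_eq_iff)
  have c: "con Fa w j i y = con Fa w i j y" for w y unfolding con_def u ..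
  have f: "fpf {..<N} Q" "Q i = j" using assms unfolding good_def by auto
  then have "Q j = i" unfolding fpf_def using assms unfolding good_def by auto
  moreover have "{j,i} = {i,j}" by auto
  ultimately show ?thesis using assms unfolding good_def u c by (auto simp: insert_commute)
qed

lemma good_cong:
  assumes "good i j Q" "\<forall>p<N. Q' p = Q p"
  shows "good i j Q'"
proof -
  have e: "eqon {..<N} Q' = eqon {..<N} Q" using assms(2) unfolding eqon_def by (auto simp: fun_eq_iff)
  have a: "axes {..<N} Q' = axes {..<N} Q" using assms(2) unfolding axes_def by auto
  have f: "fpf {..<N} Q' = fpf {..<N} Q" using assms(2) unfolding fpf_def by auto
  have "Q' i = Q i" using assms unfolding good_def by auto
  then show ?thesis using assms(1) unfolding good_def e a f by simp
qed

lemma good_fpf: "good i j Q \<Longrightarrow> fpf {..<N} Q" unfolding good_def by auto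
lemma good_B1: "good i j Q \<Longrightarrow> Fa z \<noteq> 0 \<Longrightarrow> z i = z j \<Longrightarrow> eqon {..<N} Q z" unfolding good_def by auto
lemma good_SURJ: "good i j Q \<Longrightarrow> eqon {..<N} Q y \<Longrightarrow> \<exists>a. Fa (y(i:=a, j:=a)) \<noteq> 0" unfolding good_def by auto
lemma good_Q: "good i j Q \<Longrightarrow> Q i = j \<and> Q j = i \<and> i < N \<and> j < N \<and> i \<noteq> j"
  unfolding good_def fpf_def by auto

lemma SW:
  assumes g1: "good i j Q1" and r: "r < N" "r \<noteq> i" "r \<noteq> j" and g2: "good r (Q1 r) Q2"
  shows "(\<forall>p<N. Q2 p = Q1 p) \<or>
    (Q2 i \<notin> {i,j} \<and> Q2 j = Q1 (Q2 i) \<and> (\<forall>z. Fa z \<noteq> 0 \<longrightarrow> z i = z j \<longrightarrow> z i = z (Q2 i)))"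
proof -
  have f1: "fpf {..<N} Q1" and f2: "fpf {..<N} Q2" using g1 g2 by (auto dest: good_fpf)
  note q1 = good_Q[OF g1] and q2 = good_Q[OF g2]
  have lift: "\<exists>a. eqon {..<N} Q2 (y(i:=a, j:=a)) \<and> Fa (y(i:=a, j:=a)) \<noteq> 0" if y: "eqon {..<N} Q1 y" for y
  proof -
    obtain a where a: "Fa (y(i:=a, j:=a)) \<noteq> 0" using good_SURJ[OF g1 y] by blast
    have e: "eqon {..<N} Q1 (y(i:=a, j:=a))" using y q1 f1 unfolding eqon_def fpf_def
      by (metis fun_upd_apply)
    have "(y(i:=a, j:=a)) r = (y(i:=a, j:=a)) (Q1 r)" by (rule eqonD[OF e]) (use r in simp)
    then have "eqon {..<N} Q2 (y(i:=a, j:=a))" using good_B1[OF g2 a] by simp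
    then show ?thesis using a by blast
  qed
  have C1: "Q2 p = Q1 p" if p: "p < N" "p \<notin> {i,j}" "Q2 p \<notin> {i,j}" for p
  proof (rule ccontr)
    assume ne: "Q2 p \<noteq> Q1 p"
    define y where "y = (\<lambda>q. q = p \<or> q = Q1 p)"
    have "eqon {..<N} Q1 y" unfolding y_def using eqon_ind[OF f1] p by auto
    then obtain a where e: "eqon {..<N} Q2 (y(i:=a, j:=a))" using lift by blast
    have "Q1 p \<noteq> i" using p q1 fpfD[OF f1, of p] by auto
    moreover have "Q1 p \<noteq> j"
    proof
      assume "Q1 p = j"
      then have "Q1 (Q1 p) = i" using q1 by simp
      then show False using p fpfD[OF f1, of p] by auto
    qed
    ultimately have "Q1 p \<notin> {i,j}" by simp
    have "Q2 p \<noteq> p" using fpfD[OF f2] p by auto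
    then have "(y(i:=a, j:=a)) p \<noteq> (y(i:=a, j:=a)) (Q2 p)" using p ne unfolding y_def by auto
    moreover have "(y(i:=a, j:=a)) p = (y(i:=a, j:=a)) (Q2 p)" by (rule eqonD[OF e]) (use p in simp)
    ultimately show False by contradiction
  qed
  show ?thesis
  proof (cases "Q2 i = j")
    case True
    have "Q2 p = Q1 p" if "p < N" for p
    proof -
      consider "p = i" | "p = j" | "p \<notin> {i,j}" by blast
      then show ?thesis
      proof cases
        case 3
        have a1: "Q2 (Q2 p) = p" using fpfD[OF f2, of p] that by auto
        have a2: "Q2 j = i" using fpfD[OF f2, of i] True q1 by auto
        have "Q2 p \<noteq> i" using a1 True 3 by auto
        moreover have "Q2 p \<noteq> j" using a1 a2 3 by auto
        ultimately have "Q2 p \<notin> {i,j}" by simp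
        then show ?thesis using C1 that 3 by blast
      qed (use True q1 fpfD[OF f2] in auto)
    qed
    then show ?thesis by blast
  next
    case False
    define u where "u = Q2 i"
    have u: "u \<notin> {i,j}" using False fpfD[OF f2, of i] q1 unfolding u_def by auto
    have uN: "u < N" using fpfD[OF f2, of i] q1 unfolding u_def by auto
    define u' where "u' = Q1 u"
    have uu: "Q1 (Q1 u) = u" "Q1 u \<noteq> u" "Q1 u < N" using fpfD[OF f1, of u] uN by auto
    have "Q1 u \<noteq> i" using uu(1) q1 u by auto
    moreover have "Q1 u \<noteq> j" using uu(1) q1 u by auto
    ultimately have u': "u' \<notin> {i,j}" "u' \<noteq> u" "u' < N" using uu unfolding u'_def by auto
    have "Q2 u' \<in> {i,j}"
    proof (rule ccontr)
      assume "Q2 u' \<notin> {i,j}"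
      then have "Q2 u' = Q1 u'" using C1 u' by blast
      also have "\<dots> = u" using fpfD[OF f1, of u] uN unfolding u'_def by auto
      finally have "u' = Q2 u" using fpfD[OF f2, of u'] u' by auto
      then show False using fpfD[OF f2, of i] q1 u' unfolding u_def by auto
    qed
    moreover have "Q2 u' \<noteq> i"
      using fpfD[OF f2, of u'] u' unfolding u_def by auto
    ultimately have "Q2 u' = j" by auto
    then have "Q2 j = u'" using fpfD[OF f2, of u'] u' by auto
    moreover have "z i = z u" if "Fa z \<noteq> 0" "z i = z j" for z
    proof -
      have "eqon {..<N} Q1 z" using good_B1[OF g1 that] .
      then have "z r = z (Q1 r)" using r unfolding eqon_def by auto
      then have "eqon {..<N} Q2 z" using good_B1[OF g2 that(1)] by simp
      then show ?thesis using q1 unfolding eqon_def u_def by auto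
    qed
    ultimately show ?thesis using u unfolding u_def u'_def by blast
  qed
qed

end

context core begin

definition stable :: "(nat \<Rightarrow> nat) \<Rightarrow> bool" where
  "stable Q \<longleftrightarrow> fpf {..<N} Q \<and> (\<forall>r<N. good r (Q r) Q)"

lemma three_pigeon: "\<exists>i j. i < N \<and> j < N \<and> i \<noteq> j \<and> (x::nat\<Rightarrow>bool) i = x j"
proof -
  have n: "(0::nat) < N" "(1::nat) < N" "(2::nat) < N" using N6 by auto
  consider "x 0 = x 1" | "x 0 = x 2" | "x 1 = x 2" by auto
  then show ?thesis
  proof cases
    case 1 then show ?thesis using n by (intro exI[of _ 0] exI[of _ 1]) auto
  next
    case 2 then show ?thesis using n by (intro exI[of _ 0] exI[of _ 2]) auto
  next
    case 3 then show ?thesis using n by (intro exI[of _ 1] exI[of _ 2]) auto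
  qed
qed

lemma stab:
  assumes x: "Fa x \<noteq> 0"
  shows "\<exists>Q. stable Q \<and> eqon {..<N} Q x"
proof -
  obtain i j where ij: "i < N" "j < N" "i \<noteq> j" "x i = x j" using three_pigeon by blast
  obtain Q where gQ: "good i j Q" using pair[OF ij(1-3) x ij(4)] by blast
  have fQ: "fpf {..<N} Q" using good_fpf[OF gQ] .
  have xQ: "eqon {..<N} Q x" using good_B1[OF gQ x ij(4)] .
  note qij = good_Q[OF gQ]
  show ?thesis
  proof (cases "\<exists>r Q2. r < N \<and> r \<noteq> i \<and> r \<noteq> j \<and> good r (Q r) Q2 \<and> \<not> (\<forall>p<N. Q2 p = Q p)")
    case False
    have "good r (Q r) Q" if r: "r < N" for r
    proof -
      consider "r = i" | "r = j" | "r \<noteq> i" "r \<noteq> j" by blast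
      then show ?thesis
      proof cases
        case 1 then show ?thesis using gQ qij by simp
      next
        case 2 then show ?thesis using good_sym[OF gQ] qij by simp
      next
        case 3
        have "x r = x (Q r)" by (rule eqonD[OF xQ]) (use r in simp)
        moreover have "Q r < N" "Q r \<noteq> r" using fpfD[OF fQ, of r] r by auto
        ultimately obtain Q2 where g2: "good r (Q r) Q2" using pair[OF r, of "Q r" x] x by auto
        then have "\<forall>p<N. Q2 p = Q p" using False r 3 by blast
        then show ?thesis using good_cong[OF g2] by simp
      qed
    qed
    then show ?thesis using fQ xQ unfolding stable_def by blast
  next
    case True
    then obtain r Q' where r: "r < N" "r \<noteq> i" "r \<noteq> j" and g': "good r (Q r) Q'"
      and nd: "\<not> (\<forall>p<N. Q' p = Q p)" by blast
    define s where "s = Q r"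
    have sw: "Q' i \<notin> {i,j} \<and> Q' j = Q (Q' i) \<and> (\<forall>z. Fa z \<noteq> 0 \<longrightarrow> z i = z j \<longrightarrow> z i = z (Q' i))"
      using SW[OF gQ r g'] nd by blast
    define u where "u = Q' i"
    have fQ': "fpf {..<N} Q'" using good_fpf[OF g'] .
    note qrs = good_Q[OF g']
    have s: "s < N" "s \<noteq> i" "s \<noteq> j" "Q s = r" "s \<noteq> r"
    proof -
      show "s < N" "Q s = r" "s \<noteq> r" using fpfD[OF fQ, of r] r unfolding s_def by auto
      show "s \<noteq> i" using \<open>Q s = r\<close> qij r by auto
      show "s \<noteq> j" using \<open>Q s = r\<close> qij r by auto
    qed
    have xQ': "eqon {..<N} Q' x"
    proof -
      have "x r = x (Q r)" by (rule eqonD[OF xQ]) (use r in simp)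
      then show ?thesis using good_B1[OF g' x] by simp
    qed
    have grs: "good r s Q'" using g' unfolding s_def .
    have "good r' (Q' r') Q'" if r': "r' < N" for r'
    proof -
      consider "r' = r" | "r' = s" | "r' \<noteq> r" "r' \<noteq> s" by blast
      then show ?thesis
      proof cases
        case 1 then show ?thesis using grs qrs unfolding s_def by simp
      next
        case 2 then show ?thesis using good_sym[OF grs] qrs unfolding s_def by simp
      next
        case 3
        have "x r' = x (Q' r')" by (rule eqonD[OF xQ']) (use r' in simp)
        moreover have "Q' r' < N" "Q' r' \<noteq> r'" using fpfD[OF fQ', of r'] r' by auto
        ultimately obtain Q3 where g3: "good r' (Q' r') Q3" using pair[OF r', of "Q' r'" x] x by auto
        have "\<forall>p<N. Q3 p = Q' p"
        proof (rule ccontr)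
          assume nd3: "\<not> (\<forall>p<N. Q3 p = Q' p)"
          have sw3: "Q3 r \<notin> {r,s} \<and> (\<forall>z. Fa z \<noteq> 0 \<longrightarrow> z r = z s \<longrightarrow> z r = z (Q3 r))"
            using SW[OF grs r' 3 g3] nd3 by blast
          define v where "v = Q3 r"
          define y where "y = (\<lambda>q. q = r \<or> q = Q r)"
          have "eqon {..<N} Q y" unfolding y_def using eqon_ind[OF fQ] r by auto
          then obtain a where a: "Fa (y(i:=a, j:=a)) \<noteq> 0" using good_SURJ[OF gQ] by blast
          define z where "z = y(i:=a, j:=a)"
          have "Fa z \<noteq> 0" using a unfolding z_def .
          moreover have "z i = z j" unfolding z_def by simp
          ultimately have zi: "z i = z u" using sw unfolding u_def by blast
          have zr: "z r = True" "z s = True" using r s unfolding z_def y_def s_def by auto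
          have Fz: "Fa z \<noteq> 0" using a unfolding z_def .
          have "z r = z (Q3 r)" using spec[OF conjunct2[OF sw3], of z] Fz zr by simp
          then have zv: "z v = True" using zr unfolding v_def by simp
          have "u \<noteq> r"
          proof
            assume "u = r"
            then have "Q' r = i" using fpfD[OF fQ', of i] qij unfolding u_def by auto
            then show False using qrs s unfolding s_def by auto
          qed
          moreover have "u \<noteq> s"
          proof
            assume "u = s"
            then have "Q' s = i" using fpfD[OF fQ', of i] qij unfolding u_def by auto
            moreover have "Q' s = r" using fpfD[OF fQ', of r] qrs r unfolding s_def by auto
            ultimately show False using r by auto
          qed
          ultimately have "z u = False" using sw unfolding z_def y_def u_def s_def by auto
          moreover have "z i = a" unfolding z_def using qij by simp
          ultimately have za: "a = False" using zi by simp
          have "v \<notin> {r,s}" using sw3 unfolding v_def by auto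
          then have "z v = False" using za unfolding z_def y_def s_def by auto
          then show False using zv by simp
        qed
        then show ?thesis using good_cong[OF g3] by simp
      qed
    qed
    then show ?thesis using fQ' xQ' unfolding stable_def by blast
  qed
qed

end

context core begin

lemma supp:
  assumes st: "stable Q" and full: "\<And>y. eqon {..<N} Q y \<Longrightarrow> Fa y \<noteq> 0" and z: "Fa z \<noteq> 0"
  shows "eqon {..<N} Q z"
proof (rule ccontr)
  assume nz: "\<not> eqon {..<N} Q z"
  have fQ: "fpf {..<N} Q" and gQ: "\<And>r. r < N \<Longrightarrow> good r (Q r) Q" using st unfolding stable_def by auto
  have dz: "z p \<noteq> z (Q p)" if "p < N" for p
    using good_B1[OF gQ[OF that] z] nz by auto
  have N0: "0 < N" "1 < N" "2 < N" using N6 by auto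
  define b0 where "b0 = (if Q 0 = 1 then 2 else (1::nat))"
  have b0: "b0 < N" "b0 \<noteq> 0" "b0 \<noteq> Q 0" unfolding b0_def using N0 by auto
  have Q0: "Q 0 < N" "Q 0 \<noteq> 0" "Q (Q 0) = 0" using fpfD[OF fQ, of 0] N0 by auto
  have Qb: "Q b0 < N" "Q b0 \<noteq> b0" "Q (Q b0) = b0" using fpfD[OF fQ, of b0] b0 by auto
  define p where "p = (if z 0 = z b0 then 0 else Q 0)"
  have p: "p < N" "z p = z b0" "p = 0 \<or> p = Q 0" "p \<noteq> b0"
    unfolding p_def using dz[of 0] N0 Q0 b0 by auto
  have "card ({..<N} - {0, Q 0, b0, Q b0}) \<ge> card {..<N} - card {0, Q 0, b0, Q b0}"
    by (rule diff_card_le_card_Diff) simp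
  moreover have "card {0, Q 0, b0, Q b0} \<le> 4" using card_length[of "[0, Q 0, b0, Q b0]"] by simp
  ultimately have "card ({..<N} - {0, Q 0, b0, Q b0}) > 0" using N6 by simp
  then obtain c where c: "c < N" "c \<notin> {0, Q 0, b0, Q b0}" by (metis card_gt_0_iff Diff_iff ex_in_conv lessThan_iff)
  have Qc: "Q c < N" "Q c \<noteq> c" "Q (Q c) = c" using fpfD[OF fQ, of c] c by auto
  obtain Q2 where g2: "good p b0 Q2" using pair[OF p(1) b0(1) p(4) z p(2)] by blast
  have f2: "fpf {..<N} Q2" using good_fpf[OF g2] .
  have Q2c: "Q2 c = Q c"
  proof (rule ccontr)
    assume ne: "Q2 c \<noteq> Q c"
    define y where "y = (\<lambda>t. t = c \<or> t = Q c)"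
    have ey: "eqon {..<N} Q y" unfolding y_def using eqon_ind[OF fQ] c by auto
    have "p \<noteq> c" using p c by auto
    moreover have "p \<noteq> Q c" using p c Q0 Qc by auto
    moreover have "b0 \<noteq> c" "b0 \<noteq> Q c" using c Qc by auto
    ultimately have "y p = y b0" unfolding y_def by auto
    then have "eqon {..<N} Q2 y" using good_B1[OF g2 full[OF ey]] by simp
    then have "y c = y (Q2 c)" by (rule eqonD) (use c in simp)
    then show False using ne fpfD[OF f2, of c] c unfolding y_def by auto
  qed
  have "eqon {..<N} Q2 z" using good_B1[OF g2 z p(2)] .
  then have "z c = z (Q2 c)" by (rule eqonD) (use c in simp)
  then show False using dz[OF c(1)] Q2c by simp
qed

lemma core_main: "LamF Dv {..<N} Fa"
proof (cases "\<exists>x. Fa x \<noteq> 0")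
  case False
  define Q where "Q = (\<lambda>p::nat. if even p then Suc p else p - 1)"
  have "fpf {..<N} Q" unfolding fpf_def Q_def using Neven
    by (auto, metis dvd_triv_left even_Suc less_Suc_eq even_iff_mod_2_eq_zero le_neq_implies_less
        Suc_leI, presburger+)
  then show ?thesis unfolding LamF_def using False w_in
    by (intro exI[of _ 0] exI[of _ Q] exI[of _ "\<lambda>_. w1"]) auto
next
  case True
  then obtain x where x: "Fa x \<noteq> 0" by blast
  obtain Q where st: "stable Q" and xQ: "eqon {..<N} Q x" using stab[OF x] by blast
  have fQ: "fpf {..<N} Q" and gQ: "\<And>r. r < N \<Longrightarrow> good r (Q r) Q" using st unfolding stable_def by auto
  define Ax where "Ax = axes {..<N} Q"
  have finAx: "finite Ax" unfolding Ax_def axes_def by simp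
  have AxD: "t < N \<and> t < Q t \<and> Q t < N \<and> Q t \<notin> Ax \<and> Q (Q t) = t" if "t \<in> Ax" for t
    using that fpfD[OF fQ, of t] unfolding Ax_def axes_def by auto
  have cover: "{..<N} \<subseteq> Ax \<union> Q ` Ax"
  proof
    fix p assume p: "p \<in> {..<N}"
    show "p \<in> Ax \<union> Q ` Ax"
    proof (cases "p < Q p")
      case True then show ?thesis using p unfolding Ax_def axes_def by auto
    next
      case False
      then have "Q p < p" using fpfD[OF fQ p] by auto
      then have "Q p \<in> Ax" using fpfD[OF fQ p] unfolding Ax_def axes_def by auto
      moreover have "p = Q (Q p)" using fpfD[OF fQ p] by auto
      ultimately show ?thesis by blast
    qed
  qed
  have "N \<le> card (Ax \<union> Q ` Ax)" using card_mono[OF _ cover] finAx by simp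
  also have "\<dots> \<le> card Ax + card (Q ` Ax)" by (rule card_Un_le)
  also have "\<dots> \<le> card Ax + card Ax" using card_image_le[OF finAx] by simp
  finally have card3: "3 \<le> card Ax" using N6 by simp
  define ext where "ext b = (\<lambda>p. b (min p (Q p)))" for b :: "nat \<Rightarrow> bool"
  define h where "h b = Fa (ext b)" for b
  have ext_eq: "eqon {..<N} Q (ext b)" for b
    unfolding eqon_def ext_def using fpfD[OF fQ] by (metis lessThan_iff min.commute)
  have ext_id: "Fa (ext y) = Fa y" if "eqon {..<N} Q y" for y
  proof (rule Fdep, intro allI impI)
    fix p assume "p < N"
    then have "y p = y (Q p)" using eqonD[OF that] by simp
    then show "ext y p = y p" unfolding ext_def by (simp add: min_def)
  qed
  have hyp: "\<exists>c \<phi>. (\<forall>s. \<phi> s \<in> Dv) \<and> (\<forall>b. dot w (\<lambda>a. h (b(t:=a))) = c * (\<Prod>s\<in>Ax-{t}. \<phi> s (b s)))"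
    if t: "t \<in> Ax" and w: "w \<in> {w1,w2,w3}" for t w
  proof -
    note tA = AxD[OF t]
    obtain c \<phi> where ph: "\<forall>p. \<phi> p \<in> Dv"
      and pr: "\<And>y. eqon {..<N} Q y \<Longrightarrow> con Fa w t (Q t) y = c * (\<Prod>p\<in>axes {..<N} Q - {t, Q t}. \<phi> p (y p))"
      using gQ[of t] tA w unfolding good_def by blast
    have upd: "Fa ((ext b)(t:=a, Q t:=a)) = Fa (ext (b(t:=a)))" for b a
    proof (rule Fdep, intro allI impI)
      fix p assume p: "p < N"
      have "min p (Q p) = t \<longleftrightarrow> p = t \<or> p = Q t"
        using fpfD[OF fQ, of p] p tA by (auto simp: min_def)
      then show "((ext b)(t:=a, Q t:=a)) p = ext (b(t:=a)) p" unfolding ext_def by auto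
    qed
    have "dot w (\<lambda>a. h (b(t:=a))) = c * (\<Prod>s\<in>Ax-{t}. \<phi> s (b s))" for b
    proof -
      have "dot w (\<lambda>a. h (b(t:=a))) = con Fa w t (Q t) (ext b)"
        unfolding con_def h_def upd ..
      also have "\<dots> = c * (\<Prod>p\<in>Ax - {t, Q t}. \<phi> p (ext b p))" using pr[OF ext_eq] unfolding Ax_def .
      also have "Ax - {t, Q t} = Ax - {t}" using tA by auto
      also have "(\<Prod>p\<in>Ax - {t}. \<phi> p (ext b p)) = (\<Prod>p\<in>Ax - {t}. \<phi> p (b p))"
        by (rule prod.cong) (auto simp: ext_def min_def Ax_def axes_def)
      finally show ?thesis .
    qed
    then show ?thesis using ph by blast
  qed
  obtain c0 \<phi>0 where ph0: "\<forall>s. \<phi>0 s \<in> Dv" and hb: "\<And>b. h b = c0 * (\<Prod>s\<in>Ax. \<phi>0 s (b s))"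
    apply (rule exE[OF tensor[of Ax Dv w1 w2 w3 h]])
    using finAx card3 Dnz w_in d12 d13 d23 hyp by auto
  have onQ: "Fa y = c0 * (\<Prod>s\<in>Ax. \<phi>0 s (y s))" if "eqon {..<N} Q y" for y
    using ext_id[OF that] hb[of y] unfolding h_def by simp
  have c0: "c0 \<noteq> 0" using onQ[OF xQ] x by auto
  have full: "Fa y \<noteq> 0" if "eqon {..<N} Q y" for y
    using onQ[OF that] c0 prod_Dv_nz[OF finAx ph0] by simp
  have "Fa y = (if eqon {..<N} Q y then c0 * (\<Prod>p\<in>axes {..<N} Q. \<phi>0 p (y p)) else 0)" for y
    using onQ supp[OF st full] unfolding Ax_def by auto
  then show ?thesis unfolding LamF_def using fQ ph0 by blast
qed

end

definition flip :: "nat \<Rightarrow> nat" where "flip k = (if even k then Suc k else k - 1)"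

lemma flip_props:
  assumes "k < 2 * L"
  shows "flip k < 2 * L" "flip (flip k) = k" "flip k \<noteq> k" "flip k div 2 = k div 2"
  using assms unfolding flip_def by (auto elim: oddE)

locale pairing =
  fixes \<sigma> :: "nat \<Rightarrow> nat" and L :: nat and I :: "nat set"
  assumes bij: "bij_betw \<sigma> {..<2*L} I"
begin

definition \<iota> where "\<iota> = the_inv_into {..<2*L} \<sigma>"
definition \<tau> where "\<tau> p = \<sigma> (flip (\<iota> p))"

lemma inj: "inj_on \<sigma> {..<2*L}" using bij by (simp add: bij_betw_def)
lemma img: "\<sigma> ` {..<2*L} = I" using bij by (simp add: bij_betw_def)

lemma iota_in: "p \<in> I \<Longrightarrow> \<iota> p < 2*L"
  unfolding \<iota>_def using the_inv_into_into[OF inj, of p "{..<2*L}"] img by auto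
lemma sigma_iota: "p \<in> I \<Longrightarrow> \<sigma> (\<iota> p) = p"
  unfolding \<iota>_def using f_the_inv_into_f[OF inj] img by auto
lemma iota_sigma: "k < 2*L \<Longrightarrow> \<iota> (\<sigma> k) = k"
  unfolding \<iota>_def using the_inv_into_f_f[OF inj] by auto
lemma sigma_in: "k < 2*L \<Longrightarrow> \<sigma> k \<in> I" using img by auto

lemma tau_sigma: "k < 2*L \<Longrightarrow> \<tau> (\<sigma> k) = \<sigma> (flip k)"
  unfolding \<tau>_def using iota_sigma by simp

lemma fpf_tau: "fpf I \<tau>"
  unfolding fpf_def
proof
  fix p assume p: "p \<in> I"
  have k: "\<iota> p < 2*L" using iota_in[OF p] .
  have "\<tau> p \<in> I" unfolding \<tau>_def using sigma_in flip_props(1)[OF k] by simp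
  moreover have "\<tau> p \<noteq> p"
  proof
    assume "\<tau> p = p"
    then have "\<sigma> (flip (\<iota> p)) = \<sigma> (\<iota> p)" using sigma_iota[OF p] unfolding \<tau>_def by simp
    then have "flip (\<iota> p) = \<iota> p" using inj_onD[OF inj] k flip_props(1)[OF k] by auto
    then show False using flip_props(3)[OF k] by simp
  qed
  moreover have "\<tau> (\<tau> p) = p"
    unfolding \<tau>_def using iota_sigma flip_props[OF k] sigma_iota[OF p] by simp
  ultimately show "\<tau> p \<in> I \<and> \<tau> p \<noteq> p \<and> \<tau> (\<tau> p) = p" by blast
qed

lemma tau_pair: "j < L \<Longrightarrow> \<tau> (\<sigma> (2*j)) = \<sigma> (Suc (2*j)) \<and> \<tau> (\<sigma> (Suc (2*j))) = \<sigma> (2*j)"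
  using tau_sigma[of "2*j"] tau_sigma[of "Suc (2*j)"] unfolding flip_def by auto

lemma prod_pairs:
  fixes D :: "nat \<Rightarrow> bool \<Rightarrow> bool \<Rightarrow> complex"
  assumes diag: "\<And>j a b. j < L \<Longrightarrow> a \<noteq> b \<Longrightarrow> D j a b = 0"
  shows "(\<Prod>j<L. D j (y (\<sigma> (2*j))) (y (\<sigma> (Suc (2*j))))) =
    (if eqon I \<tau> y then (\<Prod>p\<in>axes I \<tau>. D (\<iota> p div 2) (y p) (y p)) else 0)"
proof (cases "eqon I \<tau> y")
  case False
  then obtain p where p: "p \<in> I" "y p \<noteq> y (\<tau> p)" unfolding eqon_def by blast
  define k where "k = \<iota> p"
  have k: "k < 2*L" using iota_in[OF p(1)] unfolding k_def .
  define j where "j = k div 2"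
  have j: "j < L" using k unfolding j_def by simp
  have "{\<sigma> (2*j), \<sigma> (Suc (2*j))} = {p, \<tau> p}"
  proof (cases "even k")
    case True
    then have "k = 2*j" unfolding j_def by simp
    then show ?thesis using sigma_iota[OF p(1)] tau_pair[OF j] unfolding k_def by auto
  next
    case False
    then have "k = Suc (2*j)" unfolding j_def by (simp add: odd_two_times_div_two_succ)
    then show ?thesis using sigma_iota[OF p(1)] tau_pair[OF j] unfolding k_def by auto
  qed
  then have "y (\<sigma> (2*j)) \<noteq> y (\<sigma> (Suc (2*j)))" using p(2) by (auto simp: doubleton_eq_iff)
  then have "D j (y (\<sigma> (2*j))) (y (\<sigma> (Suc (2*j)))) = 0" using diag j by blast
  then have "(\<Prod>j<L. D j (y (\<sigma> (2*j))) (y (\<sigma> (Suc (2*j))))) = 0"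
    using j by (intro prod_zero) auto
  then show ?thesis using False by simp
next
  case True
  define m where "m j = min (\<sigma> (2*j)) (\<sigma> (Suc (2*j)))" for j
  have mi: "\<iota> (m j) div 2 = j" if "j < L" for j
    unfolding m_def min_def using iota_sigma[of "2*j"] iota_sigma[of "Suc (2*j)"] that by auto
  have ym: "y (m j) = y (\<sigma> (2*j))" "y (\<sigma> (Suc (2*j))) = y (\<sigma> (2*j))" if "j < L" for j
  proof -
    have "y (\<sigma> (2*j)) = y (\<tau> (\<sigma> (2*j)))" using eqonD[OF True sigma_in] that by simp
    then show "y (\<sigma> (Suc (2*j))) = y (\<sigma> (2*j))" using tau_pair[OF that] by simp
    then show "y (m j) = y (\<sigma> (2*j))" unfolding m_def min_def by auto
  qed
  have bm: "bij_betw m {..<L} (axes I \<tau>)"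
    unfolding bij_betw_def
  proof
    show "inj_on m {..<L}" using mi by (metis inj_onI lessThan_iff)
    show "m ` {..<L} = axes I \<tau>"
    proof
      show "m ` {..<L} \<subseteq> axes I \<tau>"
      proof
        fix p assume "p \<in> m ` {..<L}"
        then obtain j where j: "j < L" "p = m j" by auto
        have ne: "\<sigma> (2*j) \<noteq> \<sigma> (Suc (2*j))" using inj_onD[OF inj, of "2*j" "Suc (2*j)"] j by auto
        show "p \<in> axes I \<tau>" using j tau_pair[OF j(1)] sigma_in[of "2*j"] sigma_in[of "Suc (2*j)"] ne
          unfolding axes_def m_def min_def by auto
      qed
      show "axes I \<tau> \<subseteq> m ` {..<L}"
      proof
        fix p assume pa: "p \<in> axes I \<tau>"
        then have p: "p \<in> I" "p < \<tau> p" unfolding axes_def by auto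
        define k where "k = \<iota> p"
        have k: "k < 2*L" using iota_in[OF p(1)] unfolding k_def .
        define j where "j = k div 2"
        have j: "j < L" using k unfolding j_def by simp
        have "m j = p"
        proof (cases "even k")
          case True
          then have "k = 2*j" unfolding j_def by simp
          then show ?thesis using sigma_iota[OF p(1)] tau_pair[OF j] p(2) unfolding k_def m_def by auto
        next
          case False
          then have "k = Suc (2*j)" unfolding j_def by (simp add: odd_two_times_div_two_succ)
          then show ?thesis using sigma_iota[OF p(1)] tau_pair[OF j] p(2) unfolding k_def m_def by auto
        qed
        then show "p \<in> m ` {..<L}" using j by auto
      qed
    qed
  qed
  have "(\<Prod>p\<in>axes I \<tau>. D (\<iota> p div 2) (y p) (y p)) = (\<Prod>j<L. D (\<iota> (m j) div 2) (y (m j)) (y (m j)))"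
    using prod.reindex_bij_betw[OF bm, of "\<lambda>p. D (\<iota> p div 2) (y p) (y p)"] by simp
  also have "\<dots> = (\<Prod>j<L. D j (y (\<sigma> (2*j))) (y (\<sigma> (Suc (2*j)))))"
    by (rule prod.cong) (auto simp: mi ym)
  finally show ?thesis using True by simp
qed

end

definition gp :: "nat \<Rightarrow> nat \<Rightarrow> nat \<times> nat \<Rightarrow> nat \<times> nat" where
  "gp i j q = (if q = (0,i) then (1,0) else if q = (0,j) then (1,1) else
               if q = (1,0) then (0,i) else if q = (1,1) then (0,j) else q)"

definition cgad :: "nat \<Rightarrow> (bool list \<Rightarrow> complex) \<Rightarrow> mat2 \<Rightarrow> nat \<Rightarrow> nat \<Rightarrow> gadget" where
  "cgad N F M i j = (| gfs = [(N, F), mat_sig M],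
     gdang = map (Pair 0) (filter (\<lambda>p. p \<noteq> i \<and> p \<noteq> j) [0..<N]),
     gpair = gp i j |)"

lemma ports_cgad: "ports (cgad N F M i j) = Pair 0 ` {..<N} \<union> {(1,0),(1,1)}"
proof -
  have "(a,b) \<in> ports (cgad N F M i j) \<longleftrightarrow> (a = 0 \<and> b < N) \<or> (a = 1 \<and> b < 2)" for a b
  proof (cases a)
    case 0 then show ?thesis unfolding ports_def cgad_def by simp
  next
    case (Suc m) then show ?thesis unfolding ports_def cgad_def mat_sig_def by (cases m) auto
  qed
  then show ?thesis by (auto simp: less_2_cases_iff)
qed

lemma sum_bool2: "(\<Sum>ab\<in>(UNIV::(bool\<times>bool) set). (f ab :: 'a::comm_monoid_add)) = f (False,False) + f (False,True) + f (True,False) + f (True,True)"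
proof -
  have "(\<Sum>ab\<in>(UNIV::(bool\<times>bool) set). f ab) = (\<Sum>ab\<in>UNIV \<times> UNIV. f ab)" by simp
  also have "\<dots> = (\<Sum>a\<in>UNIV. \<Sum>b\<in>UNIV. f (a,b))" by (rule sum.cartesian_product[symmetric, of "\<lambda>a b. f (a,b)", simplified])
  also have "\<dots> = f (False,False) + f (False,True) + f (True,False) + f (True,True)"
    unfolding UNIV_bool by (simp add: add.assoc)
  finally show ?thesis .
qed

lemma gval_cgad:
  assumes ij: "i < N" "j < N" "i \<noteq> j"
    and Md: "M False True = 0" "M True False = 0"
  defines "e \<equiv> filter (\<lambda>p. p \<noteq> i \<and> p \<noteq> j) [0..<N]"
  shows "gval (cgad N F M i j) (map y e) =
     M False False * F (map (y(i:=False, j:=False)) [0..<N]) + M True True * F (map (y(i:=True, j:=True)) [0..<N])"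
proof -
  let ?G = "cgad N F M i j"
  have se: "set e = {..<N} - {i,j}" unfolding e_def by auto
  have dg: "gdang ?G = map (Pair 0) e" unfolding cgad_def e_def by simp
  have gpr: "gpair ?G = gp i j" unfolding cgad_def by simp
  have gfs: "gfs ?G = [(N, F), mat_sig M]" unfolding cgad_def by simp
  define P where "P = ports ?G"
  have P: "P = Pair 0 ` {..<N} \<union> {(1,0),(1,1)}" unfolding P_def by (rule ports_cgad)
  define sg where "sg a b = (\<lambda>q. if q \<in> P then (if fst q = 0 then (y(i:=a, j:=b)) (snd q) else if snd q = 0 then a else b) else undefined)" for a b
  define Sig where "Sig = {\<sigma> \<in> P \<rightarrow>\<^sub>E (UNIV :: bool set).
               (\<forall>t < length (gdang ?G). \<sigma> (gdang ?G ! t) = map y e ! t) \<and>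
               (\<forall>q \<in> P - set (gdang ?G). \<sigma> q = \<sigma> (gpair ?G q))}"
  have rest: "P - set (gdang ?G) = {(0,i),(0,j),(1,0),(1,1)}" using ij by (auto simp: P dg se)
  have Sig_eq: "Sig = (\<lambda>ab. sg (fst ab) (snd ab)) ` UNIV"
  proof
    show "Sig \<subseteq> (\<lambda>ab. sg (fst ab) (snd ab)) ` UNIV"
    proof
      fix \<sigma> assume s: "\<sigma> \<in> Sig"
      have pie: "\<sigma> \<in> P \<rightarrow>\<^sub>E UNIV" and dang: "\<And>t. t < length e \<Longrightarrow> \<sigma> (0, e!t) = y (e!t)"
        and pr: "\<And>q. q \<in> P - set (gdang ?G) \<Longrightarrow> \<sigma> q = \<sigma> (gp i j q)"
        using s unfolding Sig_def dg gpr by auto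
      have "\<sigma> = sg (\<sigma> (0,i)) (\<sigma> (0,j))"
      proof
        fix q
        show "\<sigma> q = sg (\<sigma> (0,i)) (\<sigma> (0,j)) q"
        proof (cases "q \<in> P")
          case False then show ?thesis using PiE_arb[OF pie False] unfolding sg_def by simp
        next
          case True
          then consider k where "k < N" "q = (0,k)" | "q = (1,0)" | "q = (1,1)" unfolding P by auto
          then show ?thesis
          proof cases
            case 1
            show ?thesis
            proof (cases "k = i \<or> k = j")
              case True then show ?thesis using 1 ij \<open>q \<in> P\<close> unfolding sg_def by auto
            next
              case False
              then have "k \<in> set e" using se 1 by auto
              then obtain t where t: "t < length e" "e ! t = k" by (auto simp: in_set_conv_nth)
              show ?thesis using dang[OF t(1)] t False 1 \<open>q \<in> P\<close> unfolding sg_def by auto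
            qed
          next
            case 2 then show ?thesis using pr[of "(1,0)"] rest \<open>q \<in> P\<close> unfolding sg_def gp_def using ij by auto
          next
            case 3 then show ?thesis using pr[of "(1,1)"] rest \<open>q \<in> P\<close> unfolding sg_def gp_def using ij by auto
          qed
        qed
      qed
      then show "\<sigma> \<in> (\<lambda>ab. sg (fst ab) (snd ab)) ` UNIV"
        by (intro image_eqI[of _ _ "(\<sigma> (0,i), \<sigma> (0,j))"]) auto
    qed
    show "(\<lambda>ab. sg (fst ab) (snd ab)) ` UNIV \<subseteq> Sig"
    proof
      fix \<sigma> assume "\<sigma> \<in> (\<lambda>ab. sg (fst ab) (snd ab)) ` UNIV"
      then obtain a b where sab: "\<sigma> = sg a b" by auto
      have "\<sigma> \<in> P \<rightarrow>\<^sub>E UNIV" unfolding sab sg_def by (auto simp: PiE_def extensional_def)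
      moreover have "\<sigma> (gdang ?G ! t) = map y e ! t" if "t < length (gdang ?G)" for t
      proof -
        have t: "t < length e" using that dg by simp
        have "e ! t \<in> set e" using t by simp
        then have "e!t < N" "e!t \<noteq> i" "e!t \<noteq> j" using se by auto
        then show ?thesis unfolding sab sg_def dg P using t by auto
      qed
      moreover have "\<sigma> q = \<sigma> (gpair ?G q)" if "q \<in> P - set (gdang ?G)" for q
        using that ij unfolding rest sab sg_def gpr gp_def P by auto
      ultimately show "\<sigma> \<in> Sig" unfolding Sig_def by blast
    qed
  qed
  have inj: "inj (\<lambda>ab. sg (fst ab) (snd ab))"
  proof (rule injI)
    fix ab cd assume "sg (fst ab) (snd ab) = sg (fst cd) (snd cd)"
    then have "sg (fst ab) (snd ab) (1,0) = sg (fst cd) (snd cd) (1,0)"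
      "sg (fst ab) (snd ab) (1,1) = sg (fst cd) (snd cd) (1,1)" by auto
    then show "ab = cd" unfolding sg_def P by (auto simp: prod_eq_iff)
  qed
  have summand: "(\<Prod>v < length (gfs ?G). snd (gfs ?G ! v) (map (\<lambda>k. sg a b (v, k)) [0..<fst (gfs ?G ! v)]))
      = F (map (y(i:=a, j:=b)) [0..<N]) * M a b" for a b
  proof -
    have me: "map (\<lambda>k. sg a b (0, k)) [0..<N] = map (y(i:=a, j:=b)) [0..<N]"
      unfolding sg_def P by auto
    have s1: "sg a b (1,0) = a" "sg a b (1,1) = b" unfolding sg_def P by auto
    have "(\<Prod>v < length (gfs ?G). snd (gfs ?G ! v) (map (\<lambda>k. sg a b (v, k)) [0..<fst (gfs ?G ! v)]))
        = F (map (\<lambda>k. sg a b (0, k)) [0..<N]) * M (sg a b (1,0)) (sg a b (1,1))"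
      unfolding gfs by (simp add: mat_sig_def numeral_2_eq_2 lessThan_Suc)
    then show ?thesis by (simp only: me s1)
  qed
  have "gval ?G (map y e) = (\<Sum>\<sigma>\<in>Sig. \<Prod>v < length (gfs ?G). snd (gfs ?G ! v) (map (\<lambda>k. \<sigma> (v, k)) [0..<fst (gfs ?G ! v)]))"
    unfolding gval_def Sig_def P_def ..
  also have "\<dots> = (\<Sum>ab\<in>UNIV. F (map (y(i:=fst ab, j:=snd ab)) [0..<N]) * M (fst ab) (snd ab))"
    unfolding Sig_eq by (subst sum.reindex[OF inj]) (auto simp: summand)
  also have "\<dots> = M False False * F (map (y(i:=False, j:=False)) [0..<N]) + M True True * F (map (y(i:=True, j:=True)) [0..<N])"
    unfolding sum_bool2 using Md by simp
  finally show ?thesis .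
qed


lemma diag_zero: "is_diagonal M \<Longrightarrow> a \<noteq> b \<Longrightarrow> M a b = 0"
  unfolding is_diagonal_def by (cases a; cases b) auto

lemma diag_nz: "is_diagonal M \<Longrightarrow> is_invertible M \<Longrightarrow> M a a \<noteq> 0"
  unfolding is_diagonal_def is_invertible_def by (cases a) auto

lemma gadget_lam:
  fixes B :: "mat2 set" and n :: nat and F :: "bool list \<Rightarrow> complex"
  assumes hyp: "\<forall>k f. k < 2 * n \<longrightarrow> realizable ({(2 * n, F)} \<union> mat_sig ` B) k f \<longrightarrow> in_lambda_span B k f"
    and dB: "\<forall>M\<in>B. is_diagonal M \<and> is_invertible M" and mone: "mone \<in> B"
    and ij: "i < 2*n" "j < 2*n" "i \<noteq> j" and M: "M \<in> B"
  shows "LamF ((\<lambda>M a. M a a) ` B) ({..<2*n} - {i,j}) (con (\<lambda>y. F (map y [0..<2*n])) (\<lambda>a. M a a) i j)"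
proof -
  define N where "N = 2*n"
  define e where "e = filter (\<lambda>p. p \<noteq> i \<and> p \<noteq> j) [0..<N]"
  define I where "I = {..<N} - {i,j}"
  define G where "G = cgad N F M i j"
  have se: "set e = I" unfolding e_def I_def by auto
  have de: "distinct e" unfolding e_def by simp
  have le: "length e = N - 2"
  proof -
    have "length e = card (set e)" using distinct_card[OF de] by simp
    also have "\<dots> = card {..<N} - card {i,j}" unfolding se I_def using ij unfolding N_def
      by (subst card_Diff_subset) auto
    finally show ?thesis using ij by simp
  qed
  have wf: "wf_gadget ({(2 * n, F)} \<union> mat_sig ` B) G"
  proof -
    have P: "ports G = Pair 0 ` {..<N} \<union> {(1,0),(1,1)}" unfolding G_def by (rule ports_cgad)
    have dg: "gdang G = map (Pair 0) e" unfolding G_def cgad_def e_def by simp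
    have rest: "ports G - set (gdang G) = {(0,i),(0,j),(1,0),(1,1)}"
      using ij by (auto simp: P dg se I_def N_def)
    show ?thesis unfolding wf_gadget_def
    proof (intro conjI)
      show "set (gfs G) \<subseteq> {(2 * n, F)} \<union> mat_sig ` B" using M unfolding G_def cgad_def N_def by auto
      show "distinct (gdang G)" unfolding dg using de by (simp add: distinct_map inj_on_def)
      show "set (gdang G) \<subseteq> ports G" unfolding dg P using se unfolding I_def by auto
      show "\<forall>q\<in>ports G - set (gdang G). gpair G q \<in> ports G - set (gdang G) \<and> gpair G q \<noteq> q \<and> gpair G (gpair G q) = q"
        unfolding rest using ij by (auto simp: G_def cgad_def gp_def)
    qed
  qed
  have lg: "length (gdang G) = N - 2" unfolding G_def cgad_def using le unfolding e_def by simp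
  have "realizable ({(2 * n, F)} \<union> mat_sig ` B) (N - 2) (gval G)"
    unfolding realizable_def using wf lg by blast
  moreover have "N - 2 < 2*n" using ij unfolding N_def by simp
  ultimately have ils: "in_lambda_span B (N-2) (gval G)" using hyp by blast
  then obtain c \<pi> Ms where bp: "bij_betw \<pi> {..<N-2} {..<N-2}" and lM: "length Ms = (N-2) div 2"
    and sM: "set Ms \<subseteq> B"
    and fm: "\<And>x. length x = N-2 \<Longrightarrow> gval G x = c * (\<Prod>j < (N-2) div 2. (Ms ! j) (x ! \<pi> (2*j)) (x ! \<pi> (2*j+1)))"
    unfolding in_lambda_span_def by blast
  define L where "L = (N-2) div 2"
  have NL: "N - 2 = 2*L" unfolding L_def N_def by simp
  define \<sigma> where "\<sigma> k = e ! (\<pi> k)" for k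
  have bs: "bij_betw \<sigma> {..<2*L} I"
  proof -
    have "bij_betw ((!) e) {..<N-2} I" using bij_betw_nth[OF de _ se[symmetric]] le by simp
    then show ?thesis using bij_betw_trans[OF bp] unfolding \<sigma>_def NL by (simp add: comp_def)
  qed
  interpret pr: pairing \<sigma> L I by (unfold_locales) (rule bs)
  have MsB: "Ms ! j \<in> B" if "j < L" for j using sM lM that unfolding L_def by auto
  have cv: "con (\<lambda>y. F (map y [0..<2*n])) (\<lambda>a. M a a) i j y =
      c * (if eqon I pr.\<tau> y then (\<Prod>p\<in>axes I pr.\<tau>. (Ms ! (pr.\<iota> p div 2)) (y p) (y p)) else 0)" for y
  proof -
    have "is_diagonal M" using dB M by auto
    then have Md: "M False True = 0" "M True False = 0" unfolding is_diagonal_def by auto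
    have "con (\<lambda>y. F (map y [0..<2*n])) (\<lambda>a. M a a) i j y = gval G (map y e)"
      unfolding G_def e_def using gval_cgad[OF ij[folded N_def] Md, of F y]
      unfolding con_def dot_def N_def by simp
    also have "\<dots> = c * (\<Prod>j < L. (Ms ! j) (map y e ! \<pi> (2*j)) (map y e ! \<pi> (2*j+1)))"
      using fm[of "map y e"] le unfolding L_def by simp
    also have "(\<Prod>j < L. (Ms ! j) (map y e ! \<pi> (2*j)) (map y e ! \<pi> (2*j+1))) =
               (\<Prod>j < L. (Ms ! j) (y (\<sigma> (2*j))) (y (\<sigma> (Suc (2*j)))))"
    proof (rule prod.cong)
      fix j assume "j \<in> {..<L}"
      then have "2*j < N-2" "2*j+1 < N-2" using NL by auto
      then have "\<pi> (2*j) < length e" "\<pi> (2*j+1) < length e"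
        using bij_betwE[OF bp] le by auto
      then show "(Ms ! j) (map y e ! \<pi> (2*j)) (map y e ! \<pi> (2*j+1)) = (Ms ! j) (y (\<sigma> (2*j))) (y (\<sigma> (Suc (2*j))))"
        unfolding \<sigma>_def by simp
    qed simp
    also have "\<dots> = (if eqon I pr.\<tau> y then (\<Prod>p\<in>axes I pr.\<tau>. (Ms ! (pr.\<iota> p div 2)) (y p) (y p)) else 0)"
      by (rule pr.prod_pairs) (use MsB dB diag_zero in blast)
    finally show ?thesis .
  qed
  define \<phi> where "\<phi> p = (\<lambda>a. (if p \<in> I then Ms ! (pr.\<iota> p div 2) else mone) a a)" for p
  have ph: "\<phi> p \<in> (\<lambda>M a. M a a) ` B" for p
  proof (cases "p \<in> I")
    case True
    then have "pr.\<iota> p < 2*L" using pr.iota_in by auto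
    then have "pr.\<iota> p div 2 < L" by auto
    then show ?thesis using MsB True unfolding \<phi>_def by auto
  next
    case False then show ?thesis using mone unfolding \<phi>_def by auto
  qed
  have "con (\<lambda>y. F (map y [0..<2*n])) (\<lambda>a. M a a) i j y =
      (if eqon I pr.\<tau> y then c * (\<Prod>p\<in>axes I pr.\<tau>. \<phi> p (y p)) else 0)" for y
  proof -
    have "(\<Prod>p\<in>axes I pr.\<tau>. \<phi> p (y p)) = (\<Prod>p\<in>axes I pr.\<tau>. (Ms ! (pr.\<iota> p div 2)) (y p) (y p))"
      by (rule prod.cong) (auto simp: \<phi>_def axes_def)
    then show ?thesis unfolding cv by simp
  qed
  then show ?thesis unfolding LamF_def I_def[symmetric] N_def[symmetric] using pr.fpf_tau ph by blast
qed


lemma lam_to_span: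
  fixes B :: "mat2 set" and n :: nat and F :: "bool list \<Rightarrow> complex"
  assumes fQ: "fpf {..<2*n} Q" and ph: "\<forall>p. \<phi> p \<in> (\<lambda>M a. M a a) ` B"
    and dB: "\<forall>M\<in>B. is_diagonal M"
    and FQ: "\<And>y. F (map y [0..<2*n]) = (if eqon {..<2*n} Q y then c * (\<Prod>p\<in>axes {..<2*n} Q. \<phi> p (y p)) else 0)"
  shows "in_lambda_span B (2*n) F"
proof -
  define N where "N = 2*n"
  define Ax where "Ax = axes {..<N} Q"
  have finAx: "finite Ax" unfolding Ax_def axes_def by simp
  have AxD: "t < N \<and> t < Q t \<and> Q t < N \<and> Q t \<notin> Ax \<and> Q (Q t) = t" if "t \<in> Ax" for t
    using that fpfD[OF fQ[folded N_def], of t] unfolding Ax_def axes_def by auto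
  have notAx: "Q p \<in> Ax" if "p < N" "p \<notin> Ax" for p
    using that fpfD[OF fQ[folded N_def], of p] unfolding Ax_def axes_def by auto
  have QQ: "Q (Q p) = p" if "p < N" for p using fpfD[OF fQ[folded N_def], of p] that by auto
  have un: "{..<N} = Ax \<union> Q ` Ax"
  proof
    show "{..<N} \<subseteq> Ax \<union> Q ` Ax"
    proof
      fix p assume p: "p \<in> {..<N}"
      show "p \<in> Ax \<union> Q ` Ax"
      proof (cases "p \<in> Ax")
        case False
        then have "Q p \<in> Ax" using notAx p by auto
        moreover have "p = Q (Q p)" using QQ p by auto
        ultimately show ?thesis by blast
      qed simp
    qed
    show "Ax \<union> Q ` Ax \<subseteq> {..<N}" using AxD by auto
  qed
  have dj: "Ax \<inter> Q ` Ax = {}" using AxD by auto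
  have injQ: "inj_on Q Ax" by (rule inj_onI) (metis AxD)
  have "N = card Ax + card Ax"
    using card_Un_disjoint[OF finAx _ dj] finAx un card_image[OF injQ] by (metis card_lessThan finite_imageI)
  then have cardAx: "card Ax = n" unfolding N_def by simp
  define as where "as = sorted_list_of_set Ax"
  have sas: "set as = Ax" and das: "distinct as" and las: "length as = n"
    unfolding as_def using finAx cardAx by auto
  define \<pi> where "\<pi> k = (if even k then as ! (k div 2) else Q (as ! (k div 2)))" for k
  have asAx: "as ! j \<in> Ax" if "j < n" for j using sas las that by auto
  have bp: "bij_betw \<pi> {..<2*n} {..<N}"
    unfolding bij_betw_def
  proof
    show "inj_on \<pi> {..<2*n}"
    proof (rule inj_onI)
      fix k k' assume k: "k \<in> {..<2*n}" "k' \<in> {..<2*n}" and eq: "\<pi> k = \<pi> k'"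
      have j: "k div 2 < n" "k' div 2 < n" using k by auto
      have "even k = even k'"
      proof (rule ccontr)
        assume "even k \<noteq> even k'"
        then show False using eq asAx[OF j(1)] asAx[OF j(2)] AxD[OF asAx[OF j(1)]] AxD[OF asAx[OF j(2)]]
          unfolding \<pi>_def by (auto split: if_splits)
      qed
      moreover have "as ! (k div 2) = as ! (k' div 2)"
      proof (cases "even k")
        case True then show ?thesis using eq \<open>even k = even k'\<close> unfolding \<pi>_def by simp
      next
        case False
        then have "Q (as ! (k div 2)) = Q (as ! (k' div 2))" using eq \<open>even k = even k'\<close> unfolding \<pi>_def by simp
        then have "Q (Q (as ! (k div 2))) = Q (Q (as ! (k' div 2)))" by simp
        then show ?thesis using AxD[OF asAx[OF j(1)]] AxD[OF asAx[OF j(2)]] by simp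
      qed
      then have "k div 2 = k' div 2" using das j las by (simp add: nth_eq_iff_index_eq)
      ultimately show "k = k'" by (metis div_mult_mod_eq even_iff_mod_2_eq_zero odd_iff_mod_2_eq_one)
    qed
    show "\<pi> ` {..<2*n} = {..<N}"
    proof
      show "\<pi> ` {..<2*n} \<subseteq> {..<N}"
      proof
        fix p assume "p \<in> \<pi> ` {..<2*n}"
        then obtain k where k: "k < 2*n" "p = \<pi> k" by auto
        then have "k div 2 < n" by auto
        then show "p \<in> {..<N}" using AxD[OF asAx] k unfolding \<pi>_def by auto
      qed
      show "{..<N} \<subseteq> \<pi> ` {..<2*n}"
      proof
        fix p assume p: "p \<in> {..<N}"
        show "p \<in> \<pi> ` {..<2*n}"
        proof (cases "p \<in> Ax")
          case True
          then obtain j where j: "j < n" "as ! j = p" using sas las by (metis in_set_conv_nth)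
          then have "\<pi> (2*j) = p" unfolding \<pi>_def by simp
          then show ?thesis using j by (intro image_eqI[of _ _ "2*j"]) auto
        next
          case False
          then have "Q p \<in> Ax" using notAx p by auto
          then obtain j where j: "j < n" "as ! j = Q p" using sas las by (metis in_set_conv_nth)
          then have "\<pi> (Suc (2*j)) = p" unfolding \<pi>_def using QQ p by simp
          then show ?thesis using j by (intro image_eqI[of _ _ "Suc (2*j)"]) auto
        qed
      qed
    qed
  qed
  interpret pr: pairing \<pi> n "{..<N}" by unfold_locales (rule bp)
  define Ms where "Ms = map (\<lambda>p. SOME M. M \<in> B \<and> \<phi> p = (\<lambda>a. M a a)) as"
  have MsP: "Ms ! j \<in> B \<and> \<phi> (as ! j) = (\<lambda>a. (Ms ! j) a a)" if "j < n" for j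
  proof -
    have "\<exists>M. M \<in> B \<and> \<phi> (as ! j) = (\<lambda>a. M a a)" using ph by blast
    then have "(SOME M. M \<in> B \<and> \<phi> (as ! j) = (\<lambda>a. M a a)) \<in> B \<and> \<phi> (as ! j) = (\<lambda>a. (SOME M. M \<in> B \<and> \<phi> (as ! j) = (\<lambda>a. M a a)) a a)"
      by (rule someI_ex)
    then show ?thesis unfolding Ms_def using that las by simp
  qed
  have tauQ: "pr.\<tau> p = Q p" if p: "p < N" for p
  proof -
    define k where "k = pr.\<iota> p"
    have k: "k < 2*n" "\<pi> k = p" using pr.iota_in pr.sigma_iota p unfolding k_def by auto
    have j: "k div 2 < n" using k by auto
    have "pr.\<tau> p = \<pi> (flip k)" using pr.tau_sigma[OF k(1)] k(2) by simp
    also have "\<dots> = Q p"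
    proof (cases "even k")
      case True then show ?thesis using k unfolding \<pi>_def flip_def by auto
    next
      case False
      then have "flip k = k - 1" "even (k - 1)" "(k - 1) div 2 = k div 2" unfolding flip_def
        by (auto elim: oddE)
      then show ?thesis using k False AxD[OF asAx[OF j]] unfolding \<pi>_def by auto
    qed
    finally show ?thesis .
  qed
  have eqt: "eqon {..<N} pr.\<tau> y = eqon {..<N} Q y" for y using tauQ unfolding eqon_def by auto
  have axt: "axes {..<N} pr.\<tau> = Ax" using tauQ unfolding Ax_def axes_def by auto
  have iota_ax: "pr.\<iota> p div 2 < n \<and> as ! (pr.\<iota> p div 2) = p" if "p \<in> Ax" for p
  proof -
    have "p \<in> set as" using that sas by simp
    then obtain j where j: "j < n" "as ! j = p" using las by (auto simp: in_set_conv_nth)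
    have "\<pi> (2*j) = p" using j unfolding \<pi>_def by simp
    then have "pr.\<iota> p = 2*j" using pr.iota_sigma[of "2*j"] j by auto
    then show ?thesis using j by simp
  qed
  show ?thesis unfolding in_lambda_span_def
  proof (intro conjI exI)
    show "even (2*n)" by simp
    show "bij_betw \<pi> {..<2*n} {..<2*n}" using bp unfolding N_def .
    show "length Ms = 2*n div 2" unfolding Ms_def using las by simp
    show "set Ms \<subseteq> B" using MsP las unfolding Ms_def by (auto simp: in_set_conv_nth)
    show "\<forall>x. length x = 2*n \<longrightarrow> F x = c * (\<Prod>j < 2*n div 2. (Ms ! j) (x ! \<pi> (2*j)) (x ! \<pi> (2*j+1)))"
    proof (intro allI impI)
      fix x :: "bool list" assume lx: "length x = 2*n"
      define y where "y p = x ! p" for p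
      have mx: "map y [0..<2*n] = x" unfolding y_def using map_nth[of x] lx by simp
      have "(\<Prod>j < 2*n div 2. (Ms ! j) (x ! \<pi> (2*j)) (x ! \<pi> (2*j+1))) =
            (\<Prod>j < n. (Ms ! j) (y (\<pi> (2*j))) (y (\<pi> (Suc (2*j)))))" unfolding y_def by simp
      also have "\<dots> = (if eqon {..<N} pr.\<tau> y then (\<Prod>p\<in>axes {..<N} pr.\<tau>. (Ms ! (pr.\<iota> p div 2)) (y p) (y p)) else 0)"
        by (rule pr.prod_pairs) (use MsP dB diag_zero in blast)
      also have "(\<Prod>p\<in>axes {..<N} pr.\<tau>. (Ms ! (pr.\<iota> p div 2)) (y p) (y p)) = (\<Prod>p\<in>Ax. \<phi> p (y p))"
        unfolding axt
      proof (rule prod.cong)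
        fix p assume "p \<in> Ax"
        then show "(Ms ! (pr.\<iota> p div 2)) (y p) (y p) = \<phi> p (y p)" using iota_ax MsP by metis
      qed simp
      finally show "F x = c * (\<Prod>j < 2*n div 2. (Ms ! j) (x ! \<pi> (2*j)) (x ! \<pi> (2*j+1)))"
        using FQ[of y] eqt[of y] unfolding mx Ax_def N_def by simp
    qed
  qed
qed


lemma indep_det:
  assumes "is_diagonal M1" "is_diagonal M2" "is_invertible M2" "lin_indep2 M1 M2"
  shows "det2 (\<lambda>a. M1 a a) (\<lambda>a. M2 a a) \<noteq> 0"
proof
  assume d: "det2 (\<lambda>a. M1 a a) (\<lambda>a. M2 a a) = 0"
  have "\<forall>u v. M2 False False * M1 u v + (- M1 False False) * M2 u v = 0"
  proof (intro allI)
    fix u v show "M2 False False * M1 u v + (- M1 False False) * M2 u v = 0"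
      using assms(1,2) d unfolding is_diagonal_def det2_def
      by (cases u; cases v) (auto simp: algebra_simps)
  qed
  then have "M2 False False = 0" using assms(4) unfolding lin_indep2_def by blast
  then show False using diag_nz[OF assms(2,3), of False] by simp
qed

theorem mainTheorem12:
  fixes B :: "mat2 set" and n :: nat and F :: "bool list \<Rightarrow> complex"
  assumes "finite_cyclic_diag_group B"
    and "card B \<ge> 3"
    and "\<exists>M1\<in>B. \<exists>M2\<in>B. \<exists>M3\<in>B. lin_indep2 M1 M2 \<and> lin_indep2 M1 M3 \<and> lin_indep2 M2 M3"
    and "n \<ge> 3"
    and "\<forall>k f. k < 2 * n \<longrightarrow> realizable ({(2 * n, F)} \<union> mat_sig ` B) k f
                \<longrightarrow> in_lambda_span B k f"
  shows "in_lambda_span B (2 * n) F"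
proof -
  have dB: "\<forall>M\<in>B. is_diagonal M \<and> is_invertible M" and mone: "mone \<in> B"
    using assms(1) unfolding finite_cyclic_diag_group_def by auto
  obtain M1 M2 M3 where M: "M1 \<in> B" "M2 \<in> B" "M3 \<in> B"
    and li: "lin_indep2 M1 M2" "lin_indep2 M1 M3" "lin_indep2 M2 M3" using assms(3) by blast
  define Dv where "Dv = (\<lambda>M a. M a a) ` B"
  define Fa where "Fa y = F (map y [0..<2*n])" for y
  define w1 where "w1 = (\<lambda>a. M1 a a)"
  define w2 where "w2 = (\<lambda>a. M2 a a)"
  define w3 where "w3 = (\<lambda>a. M3 a a)"
  interpret c: core "2*n" Fa Dv w1 w2 w3
  proof
    show "6 \<le> 2*n" using assms(4) by simp
    show "even (2*n)" by simp
    show "Fa y = Fa y'" if "\<forall>p<2*n. y p = y' p" for y y'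
      unfolding Fa_def using that by (intro arg_cong[where f=F] map_cong) auto
    show "d a \<noteq> 0" if "d \<in> Dv" for d a using that dB diag_nz unfolding Dv_def by auto
    show "w1 \<in> Dv" "w2 \<in> Dv" "w3 \<in> Dv" unfolding Dv_def w1_def w2_def w3_def using M by auto
    show "det2 w1 w2 \<noteq> 0" unfolding w1_def w2_def using indep_det dB M li by blast
    show "det2 w1 w3 \<noteq> 0" unfolding w1_def w3_def using indep_det dB M li by blast
    show "det2 w2 w3 \<noteq> 0" unfolding w2_def w3_def using indep_det dB M li by blast
    fix i j w assume ij: "i < 2*n" "j < 2*n" "i \<noteq> j" and w: "w \<in> {w1,w2,w3}"
    obtain Mk where "Mk \<in> B" "w = (\<lambda>a. Mk a a)" using w M unfolding w1_def w2_def w3_def by auto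
    then show "LamF Dv ({..<2*n} - {i,j}) (con Fa w i j)" unfolding Dv_def Fa_def
      using gadget_lam[OF assms(5) dB mone ij] by simp
  qed
  obtain c Q \<phi> where fQ: "fpf {..<2*n} Q" and ph: "\<forall>p. \<phi> p \<in> Dv"
    and FQ: "\<And>y. Fa y = (if eqon {..<2*n} Q y then c * (\<Prod>p\<in>axes {..<2*n} Q. \<phi> p (y p)) else 0)"
    using c.core_main unfolding LamF_def by blast
  show ?thesis
    by (rule lam_to_span[OF fQ ph[unfolded Dv_def]]) (use dB FQ in \<open>auto simp: Fa_def\<close>)
qed


end
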